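(* Let $\lambda$ be a nonempty partition with $n=|\lambda|$. For $\mu\in\mathcal{D}(\lambda)$, \[ \sum_{\nu\in\mathcal{U}(\lambda)}\frac{f_\mu f_\nu}{(h_\lambda(c_{\mu,\nu}))^2}=\frac{n+1}{n}(f_\lambda)^2, \] and for $\nu\in\mathcal{U}(\lambda)$, \[ \frac{f_\lambda f_\nu}{n}+\sum_{\mu\in\mathcal{D}(\lambda)}\frac{f_\mu f_\nu}{(h_\lambda(c_{\mu,\nu}))^2}=\frac{n+1}{n}(f_\lambda)^2. \]
   Context: Partitions are Young diagrams (cells $(x,y)\in\mathbb{Z}_{>0}^2$ with $x\le\lambda_y$); $\lambda'$ the conjugate. For $c=(x,y)\in\lambda$, the hook-length is $h_\lambda(c)=(\lambda_y-x)+(\lambda'_x-y)+1$. $f_\kappa$ is the number of standard Young tableaux of shape $\kappa$. $\mathcal{U}(\lambda)$ (resp. $\mathcal{D}(\lambda)$) is the set of partitions obtained from $\lambda$ by adding (resp. removing) one cell. For $\mu\in\mathcal{D}(\lambda)$ and $\nu\in\mathcal{U}(\lambda)$, let $c_1$ be the cell in the row of the cell $\nu/\lambda$ and the column of the cell $\lambda/\mu$, and $c_2$ the cell in the column of $\nu/\lambda$ and the row of $\lambda/\mu$; exactly one of $c_1,c_2$ lies in $\lambda$, and it is denoted $c_{\mu,\nu}$. *)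

theory Defs
  imports "HOL-Library.FuncSet" Complex_Main
begin

text \<open>A partition is identified with its Young diagram: a finite set of cells (x,y) with
  positive coordinates (x = column, y = row) that is closed downwards (a partial order ideal).\<close>

type_synonym cell = "nat \<times> nat"

definition is_partition :: "cell set \<Rightarrow> bool" where
  "is_partition lam \<longleftrightarrow> finite lam \<and> (\<forall>(x,y)\<in>lam. 0 < x \<and> 0 < y) \<and>
     (\<forall>(x,y)\<in>lam. \<forall>x' y'. 0 < x' \<and> x' \<le> x \<and> 0 < y' \<and> y' \<le> y \<longrightarrow> (x',y') \<in> lam)"

definition row_len :: "cell set \<Rightarrow> nat \<Rightarrow> nat" where
  "row_len lam y = card {x. (x,y) \<in> lam}"

definition col_len :: "cell set \<Rightarrow> nat \<Rightarrow> nat" where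
  "col_len lam x = card {y. (x,y) \<in> lam}"

definition hook :: "cell set \<Rightarrow> cell \<Rightarrow> nat" where
  "hook lam c = (row_len lam (snd c) - fst c) + (col_len lam (fst c) - snd c) + 1"

definition syt :: "cell set \<Rightarrow> (cell \<Rightarrow> nat) set" where
  "syt kap = {T \<in> kap \<rightarrow>\<^sub>E {1..card kap}. bij_betw T kap {1..card kap} \<and>
      (\<forall>c\<in>kap. \<forall>d\<in>kap. fst c \<le> fst d \<and> snd c \<le> snd d \<and> c \<noteq> d \<longrightarrow> T c < T d)}"

definition num_syt :: "cell set \<Rightarrow> nat" where
  "num_syt kap = card (syt kap)"

definition up_set :: "cell set \<Rightarrow> cell set set" where
  "up_set lam = {nu. is_partition nu \<and> lam \<subseteq> nu \<and> card (nu - lam) = 1}"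

definition down_set :: "cell set \<Rightarrow> cell set set" where
  "down_set lam = {mu. is_partition mu \<and> mu \<subseteq> lam \<and> card (lam - mu) = 1}"

text \<open>c_{mu,nu}: with (a,b) = nu/lam and (p,q) = lam/mu, c1 = (p,b) lies in the row of nu/lam
  and the column of lam/mu; c2 = (a,q). The one lying in lam.\<close>
definition c_cell :: "cell set \<Rightarrow> cell set \<Rightarrow> cell set \<Rightarrow> cell" where
  "c_cell lam mu nu =
     (let (a,b) = the_elem (nu - lam); (p,q) = the_elem (lam - mu);
          c1 = (p,b); c2 = (a,q)
      in if c1 \<in> lam then c1 else c2)"

end

theory Submission
  imports Defs "HOL-Computational_Algebra.Polynomial"
begin

definition wt :: "'i set \<Rightarrow> ('i \<Rightarrow> real) \<Rightarrow> 'i \<Rightarrow> real" where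
  "wt I x i = (\<Prod>m\<in>I-{i}. x i - x m)"

definition Ssum :: "nat \<Rightarrow> 'i set \<Rightarrow> ('i \<Rightarrow> real) \<Rightarrow> real" where
  "Ssum d I x = (\<Sum>i\<in>I. x i ^ d / wt I x i)"

lemma wt_remove:
  assumes "finite I" "a \<in> I" "i \<in> I" "i \<noteq> a"
  shows "wt I x i = (x i - x a) * wt (I - {a}) x i"
proof -
  have "wt I x i = (x i - x a) * (\<Prod>m\<in>(I-{i})-{a}. x i - x m)"
    unfolding wt_def by (rule prod.remove) (use assms in auto)
  also have "(I-{i})-{a} = (I-{a})-{i}" by blast
  finally show ?thesis by (simp only: wt_def)
qed

lemma wt_nz: "finite I \<Longrightarrow> inj_on x I \<Longrightarrow> i \<in> I \<Longrightarrow> wt I x i \<noteq> 0"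
  unfolding wt_def by (auto simp: inj_on_def)

lemma Ssum_shift:
  assumes "finite I" "a \<in> I" "inj_on x I"
  shows "(\<Sum>i\<in>I. x i ^ d * (x i - x a) / wt I x i) = Ssum d (I - {a}) x"
proof -
  have "(\<Sum>i\<in>I. x i ^ d * (x i - x a) / wt I x i) = (\<Sum>i\<in>I - {a}. x i ^ d * (x i - x a) / wt I x i)"
    using assms by (subst sum.remove[of _ a]) auto
  also have "\<dots> = (\<Sum>i\<in>I - {a}. x i ^ d / wt (I - {a}) x i)"
  proof (rule sum.cong)
    fix i assume i: "i \<in> I - {a}"
    then have ne: "x i - x a \<noteq> 0" using assms by (auto simp: inj_on_def)
    show "x i ^ d * (x i - x a) / wt I x i = x i ^ d / wt (I - {a}) x i"
      using i assms ne by (simp add: wt_remove)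
  qed simp
  finally show ?thesis unfolding Ssum_def by simp
qed

lemma Ssum_rec:
  assumes "finite I" "a \<in> I" "inj_on x I"
  shows "Ssum (Suc d) I x = Ssum d (I - {a}) x + x a * Ssum d I x"
proof -
  have "Ssum (Suc d) I x - x a * Ssum d I x = (\<Sum>i\<in>I. x i ^ d * (x i - x a) / wt I x i)"
    unfolding Ssum_def sum_distrib_left sum_subtractf[symmetric]
  proof (rule sum.cong)
    fix i assume "i \<in> I"
    have "x i ^ Suc d / wt I x i - x a * (x i ^ d / wt I x i) = (x i ^ Suc d - x a * x i ^ d) / wt I x i"
      by (simp add: diff_divide_distrib)
    also have "x i ^ Suc d - x a * x i ^ d = x i ^ d * (x i - x a)"
      by (simp add: algebra_simps)
    finally show "x i ^ Suc d / wt I x i - x a * (x i ^ d / wt I x i) = x i ^ d * (x i - x a) / wt I x i" .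
  qed simp
  then show ?thesis using Ssum_shift[OF assms] by simp
qed

lemma Ssum0:
  "finite I \<Longrightarrow> inj_on x I \<Longrightarrow> card I = Suc k \<Longrightarrow> Ssum 0 I x = (if k = 0 then 1 else 0)"
proof (induction k arbitrary: I)
  case 0
  then obtain a where "I = {a}" by (auto simp: card_Suc_eq)
  then show ?case by (simp add: Ssum_def wt_def)
next
  case (Suc k)
  obtain a J where J: "I = insert a J" "a \<notin> J" "card J = Suc k"
    using card_eq_SucD[OF Suc.prems(3)] by blast
  obtain b J' where "J = insert b J'"
    using card_eq_SucD[OF J(3)] by blast
  then have ab: "a \<in> I" "b \<in> I" "a \<noteq> b" using J by auto
  have "(x a - x b) * Ssum 0 I x = (\<Sum>i\<in>I. x i ^ 0 * (x i - x b) / wt I x i) - (\<Sum>i\<in>I. x i ^ 0 * (x i - x a) / wt I x i)"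
    unfolding Ssum_def sum_distrib_left sum_subtractf[symmetric]
  proof (rule sum.cong)
    fix i assume "i \<in> I"
    show "(x a - x b) * (x i ^ 0 / wt I x i) = x i ^ 0 * (x i - x b) / wt I x i - x i ^ 0 * (x i - x a) / wt I x i"
      by (simp add: diff_divide_distrib[symmetric])
  qed simp
  also have "(\<Sum>i\<in>I. x i ^ 0 * (x i - x b) / wt I x i) = Ssum 0 (I - {b}) x"
    by (rule Ssum_shift) (use Suc.prems ab in auto)
  also have "(\<Sum>i\<in>I. x i ^ 0 * (x i - x a) / wt I x i) = Ssum 0 (I - {a}) x"
    by (rule Ssum_shift) (use Suc.prems ab in auto)
  also have "Ssum 0 (I - {b}) x = Ssum 0 (I - {a}) x"
  proof -
    have f: "finite (I - {c})" "inj_on x (I - {c})" "card (I - {c}) = Suc k" if "c \<in> I" for c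
      using Suc.prems that by (auto simp: inj_on_diff)
    show ?thesis using Suc.IH[OF f[OF ab(1)]] Suc.IH[OF f[OF ab(2)]] by simp
  qed
  finally have "(x a - x b) * Ssum 0 I x = 0" by simp
  moreover have "x a \<noteq> x b" using ab Suc.prems by (auto simp: inj_on_def)
  ultimately show ?case by simp
qed

lemma Ssum_low:
  "finite I \<Longrightarrow> inj_on x I \<Longrightarrow> I \<noteq> {} \<Longrightarrow> d \<le> card I - 1 \<Longrightarrow>
     Ssum d I x = (if d = card I - 1 then 1 else 0)"
proof (induction d arbitrary: I)
  case 0
  then obtain k where "card I = Suc k" using 0 by (cases "card I") auto
  then show ?case using Ssum0[of I x k] 0 by simp
next
  case (Suc d)
  from Suc.prems obtain a where a: "a \<in> I" by auto
  have c: "card I \<ge> 2" using Suc.prems by simp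
  have cI: "card (I - {a}) = card I - 1" using a Suc.prems by simp
  have ne: "I - {a} \<noteq> {}" using c cI by (metis Suc_1 card.empty diff_is_0_eq not_less_eq_eq)
  have f1: "finite (I - {a})" "inj_on x (I - {a})" using Suc.prems by (auto simp: inj_on_diff)
  have "Ssum (Suc d) I x = Ssum d (I - {a}) x + x a * Ssum d I x"
    by (rule Ssum_rec[OF Suc.prems(1) a Suc.prems(2)])
  also have "Ssum d (I - {a}) x = (if d = card (I - {a}) - 1 then 1 else 0)"
    by (rule Suc.IH[OF f1 ne]) (use Suc.prems(4) cI in linarith)
  also have "Ssum d I x = (if d = card I - 1 then 1 else 0)"
    by (rule Suc.IH[OF Suc.prems(1-3)]) (use Suc.prems(4) in linarith)
  finally have e: "Ssum (Suc d) I x = (if d = card (I - {a}) - 1 then 1 else 0) + x a * (if d = card I - 1 then 1 else 0)" .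
  have d1: "d \<noteq> card I - 1" using Suc.prems(4) by linarith
  have d2: "(d = card (I - {a}) - 1) = (Suc d = card I - 1)" using cI c by linarith
  show ?case unfolding e d2 using d1 by simp
qed

lemma Ssum_top:
  "finite I \<Longrightarrow> inj_on x I \<Longrightarrow> I \<noteq> {} \<Longrightarrow> Ssum (card I) I x = (\<Sum>i\<in>I. x i)"
proof (induction "card I" arbitrary: I)
  case 0 then show ?case by simp
next
  case (Suc k)
  from Suc.prems obtain a where a: "a \<in> I" by auto
  have cI: "card (I - {a}) = k" using a Suc by simp
  show ?case
  proof (cases "k = 0")
    case True
    then have "card I = Suc 0" using Suc.hyps(2) by simp
    then obtain z where "I = {z}" using card_eq_SucD[of I 0] by blast
    then have "I = {a}" using a by simp
    then show ?thesis by (simp add: Ssum_def wt_def)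
  next
    case False
    have ne: "I - {a} \<noteq> {}"
    proof
      assume h: "I - {a} = {}"
      have "card (I - {a}) = 0" by (simp only: h card.empty)
      then show False using cI False by simp
    qed
    have f1: "finite (I - {a})" "inj_on x (I - {a})" using Suc.prems(1,2) by (simp_all add: inj_on_diff)
    have "Ssum (card I) I x = Ssum k (I - {a}) x + x a * Ssum k I x"
      unfolding Suc.hyps(2)[symmetric] by (rule Ssum_rec[OF Suc.prems(1) a Suc.prems(2)])
    also have "Ssum k (I - {a}) x = (\<Sum>i\<in>I - {a}. x i)"
      using Suc.hyps(1)[OF cI[symmetric] f1 ne] cI by simp
    also have "Ssum k I x = 1"
    proof -
      have "k \<le> card I - 1" "k = card I - 1" using Suc.hyps(2) by linarith+
      then show ?thesis using Ssum_low[OF Suc.prems, of k] by simp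
    qed
    finally show ?thesis using sum.remove[OF Suc.prems(1) a, of x] by simp
  qed
qed

lemma lagrange:
  fixes p :: "real poly"
  assumes "finite I" "inj_on x I" "I \<noteq> {}" "degree p \<le> card I"
  shows "(\<Sum>i\<in>I. poly p (x i) / wt I x i) = coeff p (card I - 1) + coeff p (card I) * (\<Sum>i\<in>I. x i)"
proof -
  let ?K = "card I"
  have cp: "poly p z = (\<Sum>d\<le>?K. coeff p d * z ^ d)" for z
  proof -
    have "poly p z = (\<Sum>d\<le>degree p. coeff p d * z ^ d)" by (rule poly_altdef)
    also have "\<dots> = (\<Sum>d\<le>?K. coeff p d * z ^ d)"
      by (rule sum.mono_neutral_left) (auto simp: assms coeff_eq_0)
    finally show ?thesis .
  qed
  have "(\<Sum>i\<in>I. poly p (x i) / wt I x i) = (\<Sum>d\<le>?K. coeff p d * Ssum d I x)"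
    unfolding cp Ssum_def by (simp add: sum_divide_distrib sum_distrib_left sum.swap[of _ I] mult.assoc)
  also have "\<dots> = (\<Sum>d\<in>{..?K-1}. coeff p d * Ssum d I x) + coeff p ?K * Ssum ?K I x"
  proof -
    have "?K > 0" using assms by (auto simp: card_gt_0_iff)
    then have "{..?K} = insert ?K {..?K-1}" "?K \<notin> {..?K-1}" by auto
    then show ?thesis by (simp only: sum.insert finite_atMost) simp
  qed
  also have "(\<Sum>d\<in>{..?K-1}. coeff p d * Ssum d I x) = (\<Sum>d\<in>{..?K-1}. if d = ?K - 1 then coeff p d else 0)"
    by (rule sum.cong) (use assms Ssum_low[of I x] in auto)
  also have "\<dots> = coeff p (?K - 1)" by simp
  finally show ?thesis using Ssum_top[OF assms(1-3)] by simp
qed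


definition lin :: "real \<Rightarrow> real poly" where "lin c = [:-c, 1:]"

lemma coeff_lin_0: "coeff (lin c * q) 0 = - c * coeff q 0"
  unfolding lin_def by (simp add: mult_pCons_left)

lemma coeff_lin_Suc: "coeff (lin c * q) (Suc j) = coeff q j - c * coeff q (Suc j)"
  unfolding lin_def by (simp add: mult_pCons_left)

lemma poly_lin: "poly (lin c) z = z - c"
  unfolding lin_def by simp

lemma poly_prod_lin: "poly (\<Prod>m\<in>M. lin (a m)) z = (\<Prod>m\<in>M. z - a m)"
  by (simp add: poly_prod poly_lin)

lemma prod_lin_coeffs:
  assumes "finite M"
  shows "(\<forall>j>card M. coeff (\<Prod>m\<in>M. lin (a m)) j = 0) \<and> coeff (\<Prod>m\<in>M. lin (a m)) (card M) = 1 \<and>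
         (\<forall>k. card M = Suc k \<longrightarrow> coeff (\<Prod>m\<in>M. lin (a m)) k = - (\<Sum>m\<in>M. a m))"
  using assms
proof (induction M rule: finite_induct)
  case empty
  then show ?case by (auto simp: coeff_eq_0)
next
  case (insert b M)
  let ?P = "\<Prod>m\<in>M. lin (a m)"
  have e: "(\<Prod>m\<in>insert b M. lin (a m)) = lin (a b) * ?P" using insert by simp
  have c: "card (insert b M) = Suc (card M)" using insert by simp
  have h1: "\<forall>j>Suc (card M). coeff (lin (a b) * ?P) j = 0"
  proof (intro allI impI)
    fix j assume "j > Suc (card M)"
    then obtain j' where "j = Suc j'" "j' > card M" by (cases j) auto
    then show "coeff (lin (a b) * ?P) j = 0" using insert.IH by (simp add: coeff_lin_Suc)
  qed
  have h2: "coeff (lin (a b) * ?P) (Suc (card M)) = 1"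
    using insert.IH by (simp add: coeff_lin_Suc)
  have h3: "coeff (lin (a b) * ?P) (card M) = - (\<Sum>m\<in>insert b M. a m)"
  proof (cases "card M")
    case 0
    then have "M = {}" using insert by simp
    then show ?thesis by (simp add: lin_def)
  next
    case (Suc k)
    then show ?thesis using insert.IH insert.hyps by (simp add: coeff_lin_Suc)
  qed
  show ?case unfolding e c using h1 h2 h3 by simp
qed

definition PP :: "'i set \<Rightarrow> ('i \<Rightarrow> real) \<Rightarrow> real poly" where
  "PP M a = (\<Prod>m\<in>M. lin (a m))"

lemma PP_coeffs:
  assumes "finite M"
  shows "\<And>j. j > card M \<Longrightarrow> coeff (PP M a) j = 0"
    and "coeff (PP M a) (card M) = 1"
    and "\<And>k. card M = Suc k \<Longrightarrow> coeff (PP M a) k = - (\<Sum>m\<in>M. a m)"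
  using prod_lin_coeffs[OF assms, of a] unfolding PP_def by auto

lemma PP_degree: "finite M \<Longrightarrow> degree (PP M a) \<le> card M"
  by (rule degree_le) (use PP_coeffs in auto)

lemma poly_PP: "poly (PP M a) z = (\<Prod>m\<in>M. z - a m)"
  unfolding PP_def by (rule poly_prod_lin)

lemma PP_insert: "finite M \<Longrightarrow> b \<notin> M \<Longrightarrow> PP (insert b M) a = lin (a b) * PP M a"
  unfolding PP_def by simp

lemma delta_coeffs:
  assumes "finite M"
  shows "(\<forall>j\<ge>card M. coeff (PP M (\<lambda>m. a m + 1) - PP M a) j = 0) \<and>
         (\<forall>k. card M = Suc k \<longrightarrow> coeff (PP M (\<lambda>m. a m + 1) - PP M a) k = - real (card M)) \<and>
         (\<forall>k. card M = Suc (Suc k) \<longrightarrow> coeff (PP M (\<lambda>m. a m + 1) - PP M a) k =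
             real (card M - 1) * (\<Sum>m\<in>M. a m) + real (card M) * real (card M - 1) / 2)"
  using assms
proof (induction M rule: finite_induct)
  case empty
  then show ?case by (simp add: PP_def)
next
  case (insert b M)
  let ?A = "PP M (\<lambda>m. a m + 1) - PP M a"
  let ?A' = "PP (insert b M) (\<lambda>m. a m + 1) - PP (insert b M) a"
  have cA0: "coeff ?A' 0 = - a b * coeff ?A 0 - coeff (PP M (\<lambda>m. a m + 1)) 0"
  proof -
    have "coeff ?A' 0 = coeff (lin (a b + 1) * PP M (\<lambda>m. a m + 1)) 0 - coeff (lin (a b) * PP M a) 0"
      by (simp only: PP_insert[OF insert.hyps] coeff_diff)
    also have "\<dots> = - (a b + 1) * coeff (PP M (\<lambda>m. a m + 1)) 0 + a b * coeff (PP M a) 0"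
      by (simp only: coeff_lin_0)
    finally show ?thesis by (simp add: coeff_diff algebra_simps)
  qed
  have cAS: "coeff ?A' (Suc j) = coeff ?A j - a b * coeff ?A (Suc j) - coeff (PP M (\<lambda>m. a m + 1)) (Suc j)" for j
  proof -
    have "coeff ?A' (Suc j) = coeff (lin (a b + 1) * PP M (\<lambda>m. a m + 1)) (Suc j) - coeff (lin (a b) * PP M a) (Suc j)"
      by (simp only: PP_insert[OF insert.hyps] coeff_diff)
    also have "\<dots> = (coeff (PP M (\<lambda>m. a m + 1)) j - (a b + 1) * coeff (PP M (\<lambda>m. a m + 1)) (Suc j))
        - (coeff (PP M a) j - a b * coeff (PP M a) (Suc j))"
      by (simp only: coeff_lin_Suc)
    finally show ?thesis by (simp add: coeff_diff algebra_simps)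
  qed
  have c: "card (insert b M) = Suc (card M)" using insert by simp
  note P1 = PP_coeffs[OF insert.hyps(1), where a="\<lambda>m. a m + 1"]
  have IH1: "\<And>j. j \<ge> card M \<Longrightarrow> coeff ?A j = 0" using insert.IH by blast
  have g1: "\<forall>j\<ge>card (insert b M). coeff ?A' j = 0"
  proof (intro allI impI)
    fix j assume "j \<ge> card (insert b M)"
    then obtain j' where j: "j = Suc j'" "j' \<ge> card M" using c by (cases j) auto
    show "coeff ?A' j = 0" unfolding j cAS using IH1[of j'] IH1[of "Suc j'"] P1(1)[of "Suc j'"] j by simp
  qed
  have g2: "coeff ?A' (card M) = - real (card (insert b M))"
  proof (cases "card M")
    case 0
    then have "M = {}" using insert by simp
    then show ?thesis by (simp add: PP_def lin_def)
  next
    case (Suc k)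
    have "coeff ?A k = - real (card M)" using insert.IH Suc by blast
    then show ?thesis unfolding Suc cAS c using IH1[of "Suc k"] P1(2) Suc by simp
  qed
  have g3: "coeff ?A' k = real (card (insert b M) - 1) * (\<Sum>m\<in>insert b M. a m) +
      real (card (insert b M)) * real (card (insert b M) - 1) / 2" if k: "card (insert b M) = Suc (Suc k)" for k
  proof -
    have cM: "card M = Suc k" using k c by simp
    have s: "(\<Sum>m\<in>insert b M. a m) = a b + (\<Sum>m\<in>M. a m)" using insert by simp
    have s1: "(\<Sum>m\<in>M. a m + 1) = (\<Sum>m\<in>M. a m) + real (card M)" by (simp add: sum.distrib)
    have p1k: "coeff (PP M (\<lambda>m. a m + 1)) k = - ((\<Sum>m\<in>M. a m) + real (card M))"
      using P1(3)[OF cM] s1 by simp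
    have aK: "coeff ?A k = - real (card M)" using insert.IH cM by blast
    show ?thesis
    proof (cases k)
      case 0
      have "coeff ?A' 0 = real (card M) * a b + ((\<Sum>m\<in>M. a m) + real (card M))"
        using cA0 aK p1k 0 by simp
      then show ?thesis using 0 cM s c by simp
    next
      case (Suc k2)
      have aK2: "coeff ?A k2 = real (card M - 1) * (\<Sum>m\<in>M. a m) + real (card M) * real (card M - 1) / 2"
        using insert.IH cM Suc by blast
      have "coeff ?A' k = coeff ?A k2 - a b * coeff ?A k - coeff (PP M (\<lambda>m. a m + 1)) k"
        using cAS[of k2] Suc by simp
      also have "\<dots> = real (card M - 1) * (\<Sum>m\<in>M. a m) + real (card M) * real (card M - 1) / 2
          + a b * real (card M) + ((\<Sum>m\<in>M. a m) + real (card M))"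
        using aK2 aK p1k by simp
      also have "\<dots> = real (card (insert b M) - 1) * (\<Sum>m\<in>insert b M. a m) +
          real (card (insert b M)) * real (card (insert b M) - 1) / 2"
        unfolding s c using cM by (simp add: algebra_simps of_nat_diff)
      finally show ?thesis .
    qed
  qed
  show ?case using g1 g2 g3 c by auto
qed


definition vdm :: "nat \<Rightarrow> (nat \<Rightarrow> real) \<Rightarrow> real" where
  "vdm K x = (\<Prod>i\<in>{1..K}. \<Prod>m\<in>{i<..K}. x i - x m)"

lemma prod_neg_flip:
  fixes y :: real
  shows "(\<Prod>i\<in>{1..<j}. x i - y) = (-1) ^ (j - 1) * (\<Prod>i\<in>{1..<j}. y - x i)"
proof -
  have "(\<Prod>i\<in>{1..<j}. x i - y) = (\<Prod>i\<in>{1..<j}. (-1) * (y - x i))" by (rule prod.cong) auto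
  also have "\<dots> = (\<Prod>i\<in>{1..<j}. (-1::real)) * (\<Prod>i\<in>{1..<j}. y - x i)"
    by (rule prod.distrib)
  also have "(\<Prod>i\<in>{1..<j}. (-1::real)) = (-1) ^ (j - 1)" by simp
  finally show ?thesis .
qed

lemma vdm_update:
  assumes j: "j \<in> {1..K}"
  shows "\<exists>A. \<forall>y. vdm K (x(j := y)) = A * (\<Prod>m\<in>{1..K}-{j}. y - x m)"
proof -
  define C where "C i = (if i < j then (\<Prod>m\<in>{i<..K}-{j}. x i - x m) else (\<Prod>m\<in>{i<..K}. x i - x m))" for i
  define A where "A = (-1) ^ (j - 1) * (\<Prod>i\<in>{1..K}-{j}. C i)"
  have "vdm K (x(j := y)) = A * (\<Prod>m\<in>{1..K}-{j}. y - x m)" for y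
  proof -
    let ?x = "x(j := y)"
    have "vdm K ?x = (\<Prod>m\<in>{j<..K}. ?x j - ?x m) * (\<Prod>i\<in>{1..K}-{j}. \<Prod>m\<in>{i<..K}. ?x i - ?x m)"
      unfolding vdm_def by (rule prod.remove) (use j in auto)
    also have "(\<Prod>m\<in>{j<..K}. ?x j - ?x m) = (\<Prod>m\<in>{j<..K}. y - x m)"
      by (rule prod.cong) auto
    also have "(\<Prod>i\<in>{1..K}-{j}. \<Prod>m\<in>{i<..K}. ?x i - ?x m) =
        (\<Prod>i\<in>{1..K}-{j}. (if i < j then x i - y else 1) * C i)"
    proof (rule prod.cong)
      fix i assume i: "i \<in> {1..K} - {j}"
      show "(\<Prod>m\<in>{i<..K}. ?x i - ?x m) = (if i < j then x i - y else 1) * C i"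
      proof (cases "i < j")
        case True
        have "(\<Prod>m\<in>{i<..K}. ?x i - ?x m) = (?x i - ?x j) * (\<Prod>m\<in>{i<..K}-{j}. ?x i - ?x m)"
          by (rule prod.remove) (use True j in auto)
        also have "(\<Prod>m\<in>{i<..K}-{j}. ?x i - ?x m) = (\<Prod>m\<in>{i<..K}-{j}. x i - x m)"
          by (rule prod.cong) (use i in auto)
        finally show ?thesis using True i unfolding C_def by simp
      next
        case False
        then have "i > j" using i by auto
        then have "(\<Prod>m\<in>{i<..K}. ?x i - ?x m) = (\<Prod>m\<in>{i<..K}. x i - x m)"
          by (intro prod.cong) auto
        then show ?thesis using False unfolding C_def by simp
      qed
    qed simp
    also have "\<dots> = (\<Prod>i\<in>{1..K}-{j}. if i < j then x i - y else 1) * (\<Prod>i\<in>{1..K}-{j}. C i)"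
      by (rule prod.distrib)
    also have "(\<Prod>i\<in>{1..K}-{j}. if i < j then x i - y else 1) = (\<Prod>i\<in>{1..<j}. x i - y)"
    proof -
      have "(\<Prod>i\<in>{1..K}-{j}. if i < j then x i - y else 1) = (\<Prod>i\<in>({1..K}-{j}) \<inter> {i. i < j}. x i - y)"
        by (simp add: prod.If_cases)
      also have "({1..K}-{j}) \<inter> {i. i < j} = {1..<j}" using j by auto
      finally show ?thesis .
    qed
    also have "\<dots> = (-1) ^ (j - 1) * (\<Prod>i\<in>{1..<j}. y - x i)" by (rule prod_neg_flip)
    finally have "vdm K ?x = (\<Prod>m\<in>{j<..K}. y - x m) * ((-1) ^ (j - 1) * (\<Prod>i\<in>{1..<j}. y - x i) * (\<Prod>i\<in>{1..K}-{j}. C i))" .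
    moreover have "(\<Prod>m\<in>{1..K}-{j}. y - x m) = (\<Prod>i\<in>{1..<j}. y - x i) * (\<Prod>m\<in>{j<..K}. y - x m)"
    proof -
      have "{1..K}-{j} = {1..<j} \<union> {j<..K}" using j by auto
      moreover have "{1..<j} \<inter> {j<..K} = {}" by auto
    ultimately show ?thesis using prod.union_disjoint[of "{1..<j}" "{j<..K}" "\<lambda>m. y - x m"] by simp
    qed
    ultimately show ?thesis unfolding A_def by (simp add: algebra_simps)
  qed
  then show ?thesis by blast
qed

lemma vdm_ratio:
  assumes j: "j \<in> {1..K}"
  shows "vdm K (x(j := y)) * (\<Prod>m\<in>{1..K}-{j}. z - x m) = vdm K (x(j := z)) * (\<Prod>m\<in>{1..K}-{j}. y - x m)"
proof -
  obtain A where "\<forall>y. vdm K (x(j := y)) = A * (\<Prod>m\<in>{1..K}-{j}. y - x m)" using vdm_update[OF j] by blast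
  then show ?thesis by simp
qed

lemma vdm_nz:
  assumes "inj_on x {1..K}" shows "vdm K x \<noteq> 0"
proof -
  have "x i - x m \<noteq> 0" if "i \<in> {1..K}" "m \<in> {i<..K}" for i m
  proof
    assume "x i - x m = 0"
    then have "i = m" using inj_onD[OF assms, of i m] that by auto
    then show False using that by auto
  qed
  then show ?thesis unfolding vdm_def by (simp add: prod_zero_iff)
qed


definition xv :: "nat \<Rightarrow> (nat \<Rightarrow> nat) \<Rightarrow> nat \<Rightarrow> real" where
  "xv K v i = real (v i + K - i)"

definition FF :: "nat \<Rightarrow> (nat \<Rightarrow> nat) \<Rightarrow> real" where
  "FF K v = (\<Prod>i\<in>{1..K}. fact (v i + K - i))"

definition c0 :: "nat \<Rightarrow> real" where
  "c0 K = vdm K (xv K (\<lambda>_. 0)) / FF K (\<lambda>_. 0)"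

definition Phi :: "nat \<Rightarrow> (nat \<Rightarrow> nat) \<Rightarrow> real" where
  "Phi K v = fact (\<Sum>i\<in>{1..K}. v i) * vdm K (xv K v) / FF K v / c0 K"

lemma FF_nz: "FF K v \<noteq> 0"
  unfolding FF_def by (simp add: prod_zero_iff)

lemma c0_nz: "c0 K \<noteq> 0"
proof -
  have "inj_on (xv K (\<lambda>_. 0)) {1..K}"
    by (auto simp: inj_on_def xv_def)
  then show ?thesis unfolding c0_def using vdm_nz FF_nz by simp
qed

lemma Phi_zero: "Phi K (\<lambda>_. 0) = 1"
  unfolding Phi_def c0_def using c0_nz FF_nz
  by (simp add: c0_def)

lemma prod_upd_split:
  assumes "finite I" "j \<in> I" "\<And>i. i \<in> I - {j} \<Longrightarrow> f' i = f i"
  shows "(\<Prod>i\<in>I. f' i) * f j = (\<Prod>i\<in>I. f i) * f' j"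
proof -
  have "(\<Prod>i\<in>I. f' i) = f' j * (\<Prod>i\<in>I-{j}. f' i)" by (rule prod.remove) (use assms in auto)
  also have "(\<Prod>i\<in>I-{j}. f' i) = (\<Prod>i\<in>I-{j}. f i)" by (rule prod.cong) (use assms in auto)
  finally have a: "(\<Prod>i\<in>I. f' i) = f' j * (\<Prod>i\<in>I-{j}. f i)" .
  have b: "(\<Prod>i\<in>I. f i) = f j * (\<Prod>i\<in>I-{j}. f i)" by (rule prod.remove) (use assms in auto)
  show ?thesis unfolding a b by (simp add: algebra_simps)
qed

lemma sum_upd_split:
  assumes "finite I" "j \<in> I" "\<And>i. i \<in> I - {j} \<Longrightarrow> f' i = f i"
  shows "(\<Sum>i\<in>I. f' i) + f j = (\<Sum>i\<in>I. f i) + (f' j :: nat)"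
proof -
  have "(\<Sum>i\<in>I. f' i) = f' j + (\<Sum>i\<in>I-{j}. f' i)" by (rule sum.remove) (use assms in auto)
  also have "(\<Sum>i\<in>I-{j}. f' i) = (\<Sum>i\<in>I-{j}. f i)" by (rule sum.cong) (use assms in auto)
  finally have a: "(\<Sum>i\<in>I. f' i) = f' j + (\<Sum>i\<in>I-{j}. f i)" .
  have b: "(\<Sum>i\<in>I. f i) = f j + (\<Sum>i\<in>I-{j}. f i)" by (rule sum.remove) (use assms in auto)
  show ?thesis unfolding a b by simp
qed

lemma alg_down:
  fixes F F' xj V V' w Q N fN fN1 c :: real
  assumes "F' * xj = F" "V' * w = V * Q" "w \<noteq> 0" "N \<noteq> 0" "fN = N * fN1" "xj \<noteq> 0" "F' \<noteq> 0" "c \<noteq> 0"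
  shows "fN1 * V' / F' / c = fN * V / F / c * (xj * Q / (N * w))"
proof -
  have V': "V' = V * Q / w" using assms(2,3) by (simp add: eq_divide_eq)
  show ?thesis unfolding V' assms(5) assms(1)[symmetric] using assms(3,4,6,7,8) by (simp add: field_simps)
qed

lemma alg_up:
  fixes F F' xj V V' w Q N fN fN1 c :: real
  assumes "F' = F * xj" "V' * w = V * Q" "w \<noteq> 0" "fN1 = N * fN" "xj \<noteq> 0" "F \<noteq> 0" "c \<noteq> 0"
  shows "fN1 * V' / F' / c = fN * V / F / c * (N * Q / (xj * w))"
proof -
  have V': "V' = V * Q / w" using assms(2,3) by (simp add: eq_divide_eq)
  show ?thesis unfolding V' assms(4) assms(1) using assms(3,5,6,7) by (simp add: field_simps)
qed

lemma Phi_down: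
  assumes j: "j \<in> {1..K}" and vj: "v j \<ge> 1" and inj: "inj_on (xv K v) {1..K}"
  defines "x \<equiv> xv K v" and "N \<equiv> (\<Sum>i\<in>{1..K}. v i)"
  shows "Phi K (v(j := v j - 1)) =
     Phi K v * (x j * (\<Prod>m\<in>{1..K}-{j}. x j - 1 - x m) / (real N * wt {1..K} x j))"
proof -
  let ?v = "v(j := v j - 1)"
  have x': "xv K ?v = x(j := x j - 1)"
    using vj j by (auto simp: xv_def x_def fun_eq_iff of_nat_diff)
  have NS: "(\<Sum>i\<in>{1..K}. ?v i) + v j = N + (v j - 1)"
    unfolding N_def using sum_upd_split[where I="{1..K}" and j=j and f=v and f'="?v"] j by simp
  then have N1: "(\<Sum>i\<in>{1..K}. ?v i) = N - 1" "N \<ge> 1" using vj by auto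
  have FS: "FF K ?v * fact (v j + K - j) = FF K v * fact (v j - 1 + K - j)"
    unfolding FF_def using prod_upd_split[where I="{1..K}" and j=j and f="\<lambda>i. fact (v i + K - i)" and f'="\<lambda>i. fact (?v i + K - i)"] j
    by simp
  have fj: "(fact (v j + K - j) :: real) = x j * fact (v j - 1 + K - j)"
  proof -
    have "v j + K - j = Suc (v j - 1 + K - j)" using vj j by auto
    then show ?thesis unfolding x_def xv_def by (simp add: fact_Suc)
  qed
  have xj: "x j \<noteq> 0" using vj j by (simp add: x_def xv_def)
  have FS2: "FF K ?v * x j = FF K v"
  proof -
    have "(FF K ?v * x j) * fact (v j - 1 + K - j) = FF K v * fact (v j - 1 + K - j)"
      using FS unfolding fj by (simp only: mult.assoc)
    then show ?thesis by simp
  qed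
  have V: "vdm K (x(j := x j - 1)) * wt {1..K} x j = vdm K x * (\<Prod>m\<in>{1..K}-{j}. x j - 1 - x m)"
    using vdm_ratio[OF j, of x "x j - 1" "x j"] unfolding wt_def by simp
  have wnz: "wt {1..K} x j \<noteq> 0" using wt_nz[of "{1..K}" x j] inj j unfolding x_def by simp
  have fN: "(fact N :: real) = real N * fact (N - 1)"
    using N1(2) by (simp add: fact_reduce)
  have "Phi K ?v = fact (N - 1) * vdm K (x(j := x j - 1)) / FF K ?v / c0 K"
    unfolding Phi_def x' N1(1) ..
  also have "\<dots> = fact N * vdm K x / FF K v / c0 K * (x j * (\<Prod>m\<in>{1..K}-{j}. x j - 1 - x m) / (real N * wt {1..K} x j))"
    by (rule alg_down[OF FS2 V wnz _ fN xj FF_nz c0_nz]) (use N1 in simp)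
  also have "fact N * vdm K x / FF K v / c0 K = Phi K v"
    unfolding Phi_def x_def N_def ..
  finally show ?thesis .
qed

lemma Phi_up:
  assumes j: "j \<in> {1..K}" and inj: "inj_on (xv K v) {1..K}"
  defines "x \<equiv> xv K v" and "N \<equiv> (\<Sum>i\<in>{1..K}. v i)"
  shows "Phi K (v(j := v j + 1)) =
     Phi K v * ((real N + 1) * (\<Prod>m\<in>{1..K}-{j}. x j + 1 - x m) / ((x j + 1) * wt {1..K} x j))"
proof -
  let ?v = "v(j := v j + 1)"
  have x': "xv K ?v = x(j := x j + 1)"
    using j by (auto simp: xv_def x_def fun_eq_iff)
  have NS: "(\<Sum>i\<in>{1..K}. ?v i) + v j = N + (v j + 1)"
    unfolding N_def using sum_upd_split[where I="{1..K}" and j=j and f=v and f'="?v"] j by simp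
  then have N1: "(\<Sum>i\<in>{1..K}. ?v i) = Suc N" by simp
  have FS: "FF K ?v * fact (v j + K - j) = FF K v * fact (v j + 1 + K - j)"
    unfolding FF_def using prod_upd_split[where I="{1..K}" and j=j and f="\<lambda>i. fact (v i + K - i)" and f'="\<lambda>i. fact (?v i + K - i)"] j
    by simp
  have fj: "(fact (v j + 1 + K - j) :: real) = (x j + 1) * fact (v j + K - j)"
  proof -
    have "v j + 1 + K - j = Suc (v j + K - j)" using j by auto
    then show ?thesis unfolding x_def xv_def by (simp add: fact_Suc)
  qed
  have xj: "x j + 1 \<noteq> 0" by (simp add: x_def xv_def)
  have FS2: "FF K ?v = FF K v * (x j + 1)"
  proof -
    have "FF K ?v * fact (v j + K - j) = (FF K v * (x j + 1)) * fact (v j + K - j)"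
      using FS unfolding fj by (simp only: mult.assoc)
    then show ?thesis by simp
  qed
  have V: "vdm K (x(j := x j + 1)) * wt {1..K} x j = vdm K x * (\<Prod>m\<in>{1..K}-{j}. x j + 1 - x m)"
    using vdm_ratio[OF j, of x "x j + 1" "x j"] unfolding wt_def by simp
  have wnz: "wt {1..K} x j \<noteq> 0" using wt_nz[of "{1..K}" x j] inj j unfolding x_def by simp
  have fN: "(fact (Suc N) :: real) = (real N + 1) * fact N"
    by (simp add: fact_Suc)
  have "Phi K ?v = fact (Suc N) * vdm K (x(j := x j + 1)) / FF K ?v / c0 K"
    unfolding Phi_def x' N1(1) ..
  also have "\<dots> = fact N * vdm K x / FF K v / c0 K * ((real N + 1) * (\<Prod>m\<in>{1..K}-{j}. x j + 1 - x m) / ((x j + 1) * wt {1..K} x j))"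
    by (rule alg_up[OF FS2 V wnz fN xj FF_nz c0_nz])
  also have "fact N * vdm K x / FF K v / c0 K = Phi K v"
    unfolding Phi_def x_def N_def ..
  finally show ?thesis .
qed


lemma lagrange_ext:
  fixes p :: "real poly" and x :: "nat \<Rightarrow> real"
  assumes I: "finite I" "0 \<notin> I" "I \<noteq> {}" and inj: "inj_on x I" and c: "c \<notin> x ` I"
    and deg: "degree p \<le> card I + 1"
  shows "(\<Sum>i\<in>I. poly p (x i) / ((x i - c) * wt I x i)) + poly p c / (\<Prod>m\<in>I. c - x m)
       = coeff p (card I) + coeff p (card I + 1) * ((\<Sum>i\<in>I. x i) + c)"
proof -
  define J where "J = insert 0 I"
  define y where "y = x(0 := c)"
  have fJ: "finite J" "J \<noteq> {}" using I unfolding J_def by auto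
  have cJ: "card J = card I + 1" using I unfolding J_def by simp
  have injy: "inj_on y J"
    unfolding J_def y_def using inj c I(2) by (auto simp: inj_on_def)
  have L: "(\<Sum>i\<in>J. poly p (y i) / wt J y i) = coeff p (card J - 1) + coeff p (card J) * (\<Sum>i\<in>J. y i)"
    by (rule lagrange[OF fJ(1) injy fJ(2)]) (use deg cJ in simp)
  have s1: "(\<Sum>i\<in>J. poly p (y i) / wt J y i) = poly p (y 0) / wt J y 0 + (\<Sum>i\<in>I. poly p (y i) / wt J y i)"
    unfolding J_def using I by (simp add: sum.insert)
  have w0: "wt J y 0 = (\<Prod>m\<in>I. c - x m)"
  proof -
    have "J - {0} = I" unfolding J_def using I by auto
    then have "wt J y 0 = (\<Prod>m\<in>I. y 0 - y m)" unfolding wt_def by simp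
    also have "\<dots> = (\<Prod>m\<in>I. c - x m)" by (rule prod.cong) (use I in \<open>auto simp: y_def\<close>)
    finally show ?thesis .
  qed
  have wi: "wt J y i = (x i - c) * wt I x i" if i: "i \<in> I" for i
  proof -
    have "wt J y i = (y i - y 0) * wt (J - {0}) y i"
      by (rule wt_remove) (use fJ i I in \<open>auto simp: J_def\<close>)
    also have "J - {0} = I" unfolding J_def using I by auto
    also have "wt I y i = wt I x i" unfolding wt_def
      by (rule prod.cong) (use I i in \<open>auto simp: y_def\<close>)
    finally have "wt J y i = (y i - y 0) * wt I x i" .
    moreover have "y i - y 0 = x i - c" using i I by (auto simp: y_def)
    ultimately show ?thesis by simp
  qed
  have s2: "(\<Sum>i\<in>I. poly p (y i) / wt J y i) = (\<Sum>i\<in>I. poly p (x i) / ((x i - c) * wt I x i))"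
    by (rule sum.cong) (use wi I in \<open>auto simp: y_def\<close>)
  have s3: "(\<Sum>i\<in>J. y i) = (\<Sum>i\<in>I. x i) + c"
  proof -
    have "(\<Sum>i\<in>J. y i) = y 0 + (\<Sum>i\<in>I. y i)" unfolding J_def using I by (simp add: sum.insert)
    also have "(\<Sum>i\<in>I. y i) = (\<Sum>i\<in>I. x i)" by (rule sum.cong) (use I in \<open>auto simp: y_def\<close>)
    finally show ?thesis by (simp add: y_def)
  qed
  show ?thesis using L s1 s2 s3 w0 cJ by (simp add: y_def)
qed


definition Ualg :: "nat \<Rightarrow> (nat \<Rightarrow> real) \<Rightarrow> nat \<Rightarrow> nat \<Rightarrow> real" where
  "Ualg K x N i = (real N + 1) * (\<Prod>m\<in>{1..K}-{i}. x i + 1 - x m) / ((x i + 1) * wt {1..K} x i)"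

definition Dalg :: "nat \<Rightarrow> (nat \<Rightarrow> real) \<Rightarrow> nat \<Rightarrow> nat \<Rightarrow> real" where
  "Dalg K x N j = x j * (\<Prod>m\<in>{1..K}-{j}. x j - 1 - x m) / (real N * wt {1..K} x j)"

lemma poly_pCons0: "poly (pCons 0 A) z = z * poly A z" by simp

lemma prod_self_shift:
  fixes x :: "nat \<Rightarrow> real"
  assumes "finite I" "j \<in> I"
  shows "(\<Prod>m\<in>I. x j - (x m + 1)) = - (\<Prod>m\<in>I-{j}. x j - 1 - x m)"
proof -
  have "(\<Prod>m\<in>I. x j - (x m + 1)) = (x j - (x j + 1)) * (\<Prod>m\<in>I-{j}. x j - (x m + 1))"
    by (rule prod.remove) (use assms in auto)
  also have "(\<Prod>m\<in>I-{j}. x j - (x m + 1)) = (\<Prod>m\<in>I-{j}. x j - 1 - x m)"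
    by (rule prod.cong) auto
  finally show ?thesis by simp
qed

lemma sumD:
  fixes x :: "nat \<Rightarrow> real"
  assumes K: "K \<ge> 1" and inj: "inj_on x {1..K}"
    and N: "real N = (\<Sum>i\<in>{1..K}. x i) - real K * (real K - 1) / 2" and Npos: "N > 0"
  shows "(\<Sum>j\<in>{1..K}. Dalg K x N j) = 1"
proof -
  define I where "I = {1..K}"
  have fI: "finite I" "I \<noteq> {}" "card I = K" using K unfolding I_def by auto
  define A where "A = PP I (\<lambda>m. x m + 1) - PP I x"
  define p where "p = pCons 0 A"
  note dc = delta_coeffs[OF fI(1), of x, folded A_def, unfolded fI(3)]
  have pv: "x j * (\<Prod>m\<in>I-{j}. x j - 1 - x m) = - poly p (x j)" if j: "j \<in> I" for j
  proof -
    have "poly (PP I x) (x j) = 0" unfolding poly_PP by (rule prod_zero[OF fI(1)]) (use j in auto)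
    moreover have "poly (PP I (\<lambda>m. x m + 1)) (x j) = - (\<Prod>m\<in>I-{j}. x j - 1 - x m)"
      unfolding poly_PP by (rule prod_self_shift[OF fI(1) j])
    ultimately show ?thesis unfolding p_def A_def by simp
  qed
  have degp: "degree p \<le> card I"
  proof (rule degree_le, intro allI impI)
    fix j assume "card I < j"
    then obtain j' where "j = Suc j'" "j' \<ge> K" using fI by (cases j) auto
    then show "coeff p j = 0" unfolding p_def using dc by simp
  qed
  have L: "(\<Sum>j\<in>I. poly p (x j) / wt I x j) = coeff p (K - 1) + coeff p K * (\<Sum>j\<in>I. x j)"
    using lagrange[OF fI(1) inj[folded I_def] fI(2) degp] fI(3) by simp
  have cK: "coeff p K = - real K"
  proof -
    have "K = Suc (K - 1)" using K by simp
    then show ?thesis unfolding p_def using dc by (metis coeff_pCons_Suc)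
  qed
  have cK1: "coeff p (K - 1) = real (K - 1) * (\<Sum>j\<in>I. x j) + real K * real (K - 1) / 2"
  proof (cases "K = 1")
    case True then show ?thesis unfolding p_def by simp
  next
    case False
    then have "K - 1 = Suc (K - 2)" "K = Suc (Suc (K - 2))" using K by auto
    then show ?thesis unfolding p_def using dc by (metis coeff_pCons_Suc)
  qed
  have "(\<Sum>j\<in>I. Dalg K x N j) = (\<Sum>j\<in>I. - (poly p (x j) / wt I x j) / real N)"
  proof (rule sum.cong)
    fix j assume j: "j \<in> I"
    have "Dalg K x N j = x j * (\<Prod>m\<in>I-{j}. x j - 1 - x m) / (real N * wt I x j)"
      unfolding Dalg_def I_def ..
    also have "\<dots> = - poly p (x j) / (real N * wt I x j)" using pv[OF j] by simp
    finally show "Dalg K x N j = - (poly p (x j) / wt I x j) / real N"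
      by (simp add: divide_divide_eq_left mult.commute)
  qed simp
  also have "\<dots> = - (\<Sum>j\<in>I. poly p (x j) / wt I x j) / real N"
    by (simp add: sum_divide_distrib sum_negf)
  also have "\<dots> = 1" unfolding L cK cK1 using Npos K N[folded I_def]
    by (simp add: field_simps of_nat_diff)
  finally show ?thesis unfolding I_def .
qed

lemma alg3:
  fixes a d p w :: real
  assumes "d \<noteq> 0"
  shows "a * d * p / w / d^2 = a * (p / (d * w))"
proof (cases "w = 0")
  case True then show ?thesis by simp
next
  case False then show ?thesis using assms by (simp add: power2_eq_square field_simps)
qed

lemma alg4:
  fixes d p w N :: real
  assumes "d \<noteq> 0"
  shows "- (p * d) / (N * w) / d^2 = - (p / (d * w)) / N"
proof (cases "w = 0 \<or> N = 0")
  case True then show ?thesis by auto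
next
  case False then show ?thesis using assms by (simp add: power2_eq_square field_simps)
qed

lemma id1:
  fixes x :: "nat \<Rightarrow> real"
  assumes K: "K \<ge> 2" and inj: "inj_on x {1..K}" and xK: "x K = 0"
    and nonneg: "\<forall>i\<in>{1..K}. x i \<ge> 0"
    and j: "j \<in> {1..K}" "j \<noteq> K" and cj: "x j - 1 \<notin> x ` {1..K}" and Npos: "N > 0"
  shows "Dalg K x N j * (\<Sum>i\<in>{1..K}. Ualg K x N i / (x i + 1 - x j)^2) = (real N + 1) / real N"
proof -
  define I where "I = {1..K}"
  define c where "c = x j - 1"
  define M where "M = I - {K} - {j}"
  define s where "s = PP M (\<lambda>m. x m - 1)"
  have fI: "finite I" "0 \<notin> I" "I \<noteq> {}" "card I = K" using K unfolding I_def by auto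
  have KI: "K \<in> I" using K unfolding I_def by auto
  have jI: "j \<in> I" using j unfolding I_def by auto
  have cI: "c \<notin> x ` I" using cj unfolding c_def I_def .
  have fM: "finite M" unfolding M_def using fI by auto
  have cM: "card M = K - 2" unfolding M_def using fI KI jI j(2) by (simp add: card_Diff_singleton_if)
  have ps: "poly s z = (\<Prod>m\<in>M. z + 1 - x m)" for z
    unfolding s_def poly_PP by (rule prod.cong) auto
  have injI: "inj_on x I" using inj unfolding I_def .
  have wnz: "wt I x i \<noteq> 0" if "i \<in> I" for i using wt_nz[OF fI(1) injI that] .
  have Ua: "Ualg K x N i / (x i + 1 - x j)^2 = (real N + 1) * (poly s (x i) / ((x i - c) * wt I x i))"
    if i: "i \<in> I" for i
  proof -
    have xi1: "x i + 1 \<noteq> 0" using nonneg i unfolding I_def by force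
    have xic: "x i - c \<noteq> 0" using cI i by force
    have R: "(\<Prod>m\<in>I-{i}. x i + 1 - x m) = (x i + 1) * (\<Prod>m\<in>I-{K}. x i + 1 - x m)"
    proof (cases "i = K")
      case True then show ?thesis using xK by simp
    next
      case False
      have "(\<Prod>m\<in>I-{i}. x i + 1 - x m) = (x i + 1 - x K) * (\<Prod>m\<in>I-{i}-{K}. x i + 1 - x m)"
        by (rule prod.remove) (use fI KI False in auto)
      moreover have "(\<Prod>m\<in>I-{K}. x i + 1 - x m) = (x i + 1 - x i) * (\<Prod>m\<in>I-{K}-{i}. x i + 1 - x m)"
        by (rule prod.remove) (use fI i False in auto)
      moreover have "I-{i}-{K} = I-{K}-{i}" by blast
      ultimately show ?thesis using xK by simp
    qed
    have R2: "(\<Prod>m\<in>I-{K}. x i + 1 - x m) = (x i - c) * poly s (x i)"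
    proof -
      have "(\<Prod>m\<in>I-{K}. x i + 1 - x m) = (x i + 1 - x j) * (\<Prod>m\<in>M. x i + 1 - x m)"
        unfolding M_def by (rule prod.remove) (use fI jI j(2) in auto)
      then show ?thesis unfolding ps c_def by simp
    qed
    have "Ualg K x N i = (real N + 1) * ((x i + 1) * ((x i - c) * poly s (x i))) / ((x i + 1) * wt I x i)"
      unfolding Ualg_def I_def[symmetric] R R2 ..
    also have "\<dots> = (real N + 1) * (x i - c) * poly s (x i) / wt I x i"
      using xi1 by simp
    finally have "Ualg K x N i = (real N + 1) * (x i - c) * poly s (x i) / wt I x i" .
    moreover have "(x i + 1 - x j)^2 = (x i - c)^2" unfolding c_def by (simp add: algebra_simps)
    ultimately show ?thesis using alg3[OF xic] by simp
  qed
  have degs: "degree s \<le> card I + 1" using PP_degree[OF fM, of "\<lambda>m. x m - 1"] cM fI unfolding s_def by simp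
  have LE: "(\<Sum>i\<in>I. poly s (x i) / ((x i - c) * wt I x i)) + poly s c / (\<Prod>m\<in>I. c - x m)
       = coeff s (card I) + coeff s (card I + 1) * ((\<Sum>i\<in>I. x i) + c)"
    by (rule lagrange_ext[OF fI(1-3) injI cI degs])
  have c0: "coeff s (card I) = 0" "coeff s (card I + 1) = 0"
    using PP_coeffs(1)[OF fM, of _ "\<lambda>m. x m - 1"] cM fI K unfolding s_def by auto
  have S: "(\<Sum>i\<in>I. poly s (x i) / ((x i - c) * wt I x i)) = - (poly s c / (\<Prod>m\<in>I. c - x m))"
    using LE c0 by simp
  define Pc where "Pc = (\<Prod>m\<in>I. c - x m)"
  have Pc_nz: "Pc \<noteq> 0" unfolding Pc_def using cI fI by (auto simp: prod_zero_iff)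
  have Pc2: "Pc = - (\<Prod>m\<in>I-{j}. c - x m)"
  proof -
    have "Pc = (c - x j) * (\<Prod>m\<in>I-{j}. c - x m)" unfolding Pc_def by (rule prod.remove) (use fI jI in auto)
    then show ?thesis unfolding c_def by simp
  qed
  have wj: "wt I x j = x j * poly s c"
  proof -
    have "wt I x j = (x j - x K) * (\<Prod>m\<in>I-{j}-{K}. x j - x m)"
      unfolding wt_def by (rule prod.remove) (use fI KI j(2) in auto)
    moreover have "I-{j}-{K} = M" unfolding M_def by blast
    moreover have "poly s c = (\<Prod>m\<in>M. x j - x m)" unfolding ps c_def by simp
    ultimately show ?thesis using xK by simp
  qed
  have xj: "x j \<noteq> 0"
  proof
    assume "x j = 0" then have "x j = x K" using xK by simp
    then show False using inj_onD[OF injI _ jI KI] j(2) by simp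
  qed
  have sc: "poly s c \<noteq> 0" using wnz[OF jI] wj by simp
  have D: "Dalg K x N j = - Pc / (real N * poly s c)"
  proof -
    have "Dalg K x N j = x j * (\<Prod>m\<in>I-{j}. c - x m) / (real N * wt I x j)"
      unfolding Dalg_def I_def[symmetric] c_def ..
    also have "\<dots> = x j * (- Pc) / (real N * (x j * poly s c))" unfolding wj Pc2 by simp
    finally show ?thesis using xj by simp
  qed
  have "(\<Sum>i\<in>{1..K}. Ualg K x N i / (x i + 1 - x j)^2) = (\<Sum>i\<in>I. (real N + 1) * (poly s (x i) / ((x i - c) * wt I x i)))"
    unfolding I_def[symmetric] by (rule sum.cong) (simp_all add: Ua)
  also have "\<dots> = (real N + 1) * (- (poly s c / Pc))" unfolding sum_distrib_left[symmetric] S Pc_def ..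
  finally have T: "(\<Sum>i\<in>{1..K}. Ualg K x N i / (x i + 1 - x j)^2) = - ((real N + 1) * poly s c / Pc)" by simp
  show ?thesis unfolding T D using Pc_nz sc Npos by (simp add: field_simps)
qed

lemma id2:
  fixes x :: "nat \<Rightarrow> real"
  assumes K: "K \<ge> 1" and inj: "inj_on x {1..K}"
    and nonneg: "\<forall>i\<in>{1..K}. x i \<ge> 0"
    and i: "i \<in> {1..K}" and ci: "x i + 1 \<notin> x ` {1..K}" and Npos: "N > 0"
  shows "Ualg K x N i / real N + (\<Sum>j\<in>{1..K}. Dalg K x N j * Ualg K x N i / (x i + 1 - x j)^2) = (real N + 1) / real N"
proof -
  define I where "I = {1..K}"
  define c where "c = x i + 1"
  define t where "t = pCons 0 (PP (I-{i}) (\<lambda>m. x m + 1))"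
  have fI: "finite I" "0 \<notin> I" "I \<noteq> {}" "card I = K" using K unfolding I_def by auto
  have iI: "i \<in> I" using i unfolding I_def by auto
  have cI: "c \<notin> x ` I" using ci unfolding c_def I_def .
  have injI: "inj_on x I" using inj unfolding I_def .
  have wnz: "wt I x j \<noteq> 0" if "j \<in> I" for j using wt_nz[OF fI(1) injI that] .
  have fM: "finite (I-{i})" "card (I-{i}) = K - 1" using fI iI by auto
  have pt: "poly t z = z * (\<Prod>m\<in>I-{i}. z - (x m + 1))" for z
    unfolding t_def by (simp add: poly_PP)
  have Da: "Dalg K x N j / (x i + 1 - x j)^2 = - (poly t (x j) / ((x j - c) * wt I x j)) / real N"
    if j: "j \<in> I" for j
  proof -
    have xjc: "x j - c \<noteq> 0" using cI j by force
    have "poly t (x j) * (x j - c) = x j * ((\<Prod>m\<in>I-{i}. x j - (x m + 1)) * (x j - (x i + 1)))"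
      unfolding pt c_def by simp
    also have "(\<Prod>m\<in>I-{i}. x j - (x m + 1)) * (x j - (x i + 1)) = (\<Prod>m\<in>I. x j - (x m + 1))"
      using prod.remove[OF fI(1) iI, of "\<lambda>m. x j - (x m + 1)"] by simp
    also have "\<dots> = - (\<Prod>m\<in>I-{j}. x j - 1 - x m)" by (rule prod_self_shift[OF fI(1) j])
    finally have e: "x j * (\<Prod>m\<in>I-{j}. x j - 1 - x m) = - (poly t (x j) * (x j - c))" by simp
    have "Dalg K x N j = - (poly t (x j) * (x j - c)) / (real N * wt I x j)"
      unfolding Dalg_def I_def[symmetric] e ..
    moreover have "(x i + 1 - x j)^2 = (x j - c)^2"
    proof -
      have "x i + 1 - x j = - (x j - c)" unfolding c_def by simp
      then show ?thesis by (simp only: power2_minus)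
    qed
    ultimately show ?thesis using alg4[OF xjc] by simp
  qed
  have degt: "degree t \<le> card I + 1"
  proof -
    have "degree (PP (I-{i}) (\<lambda>m. x m + 1)) \<le> K - 1" using PP_degree[OF fM(1)] fM(2) by simp
    then show ?thesis unfolding t_def using fI K by (simp add: degree_pCons_eq_if) linarith
  qed
  have LE: "(\<Sum>j\<in>I. poly t (x j) / ((x j - c) * wt I x j)) + poly t c / (\<Prod>m\<in>I. c - x m)
       = coeff t (card I) + coeff t (card I + 1) * ((\<Sum>j\<in>I. x j) + c)"
    by (rule lagrange_ext[OF fI(1-3) injI cI degt])
  have ct: "coeff t (card I) = 1" "coeff t (card I + 1) = 0"
  proof -
    have "card I = Suc (K - 1)" using fI K by simp
    then show "coeff t (card I) = 1" unfolding t_def using PP_coeffs(2)[OF fM(1)] fM(2) by simp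
    show "coeff t (card I + 1) = 0" unfolding t_def using PP_coeffs(1)[OF fM(1)] fM(2) fI K by simp
  qed
  define Q where "Q = (\<Prod>m\<in>I. c - x m)"
  have Q_nz: "Q \<noteq> 0" unfolding Q_def using cI fI by (auto simp: prod_zero_iff)
  have S: "(\<Sum>j\<in>I. poly t (x j) / ((x j - c) * wt I x j)) = 1 - poly t c / Q"
    using LE ct unfolding Q_def by simp
  have tc: "poly t c = (x i + 1) * wt I x i"
  proof -
    have "poly t c = (x i + 1) * (\<Prod>m\<in>I-{i}. x i + 1 - (x m + 1))" unfolding pt c_def ..
    also have "(\<Prod>m\<in>I-{i}. x i + 1 - (x m + 1)) = wt I x i" unfolding wt_def by (rule prod.cong) auto
    finally show ?thesis .
  qed
  have Q2: "Q = (\<Prod>m\<in>I-{i}. x i + 1 - x m)"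
  proof -
    have "Q = (c - x i) * (\<Prod>m\<in>I-{i}. c - x m)" unfolding Q_def by (rule prod.remove) (use fI iI in auto)
    then show ?thesis unfolding c_def by simp
  qed
  have xi1: "x i + 1 \<noteq> 0" using nonneg iI unfolding I_def by force
  have tc_nz: "poly t c \<noteq> 0" unfolding tc using xi1 wnz[OF iI] by simp
  have U: "Ualg K x N i = (real N + 1) * Q / poly t c"
    unfolding Ualg_def I_def[symmetric] Q2 tc ..
  have "(\<Sum>j\<in>{1..K}. Dalg K x N j * Ualg K x N i / (x i + 1 - x j)^2)
      = Ualg K x N i * (\<Sum>j\<in>I. Dalg K x N j / (x i + 1 - x j)^2)"
    unfolding I_def sum_distrib_left by (rule sum.cong) (simp_all add: field_simps)
  also have "(\<Sum>j\<in>I. Dalg K x N j / (x i + 1 - x j)^2) = (\<Sum>j\<in>I. - (poly t (x j) / ((x j - c) * wt I x j)) / real N)"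
    by (rule sum.cong) (simp_all add: Da)
  also have "\<dots> = - (1 - poly t c / Q) / real N"
    unfolding S[symmetric] by (simp add: sum_divide_distrib sum_negf)
  finally have T: "(\<Sum>j\<in>{1..K}. Dalg K x N j * Ualg K x N i / (x i + 1 - x j)^2) = Ualg K x N i * (- (1 - poly t c / Q) / real N)" .
  show ?thesis unfolding T unfolding U using Q_nz tc_nz Npos by (simp add: field_simps)
qed


lemma part_finite: "is_partition lam \<Longrightarrow> finite lam"
  unfolding is_partition_def by auto

lemma part_pos: "is_partition lam \<Longrightarrow> (x,y) \<in> lam \<Longrightarrow> 0 < x \<and> 0 < y"
  unfolding is_partition_def by auto

lemma part_down: "is_partition lam \<Longrightarrow> (x,y) \<in> lam \<Longrightarrow> 0 < x' \<Longrightarrow> x' \<le> x \<Longrightarrow> 0 < y' \<Longrightarrow> y' \<le> y \<Longrightarrow> (x',y') \<in> lam"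
  unfolding is_partition_def by blast

lemma row_set:
  assumes P: "is_partition lam" and y: "0 < y"
  shows "{x. (x,y) \<in> lam} = {1..row_len lam y}"
proof -
  define S where "S = {x. (x,y) \<in> lam}"
  have fS: "finite S"
  proof -
    have "S \<subseteq> fst ` lam" unfolding S_def by force
    then show ?thesis using part_finite[OF P] finite_surj by blast
  qed
  have "S = {1..card S}"
  proof (cases "S = {}")
    case True then show ?thesis by simp
  next
    case False
    define m where "m = Max S"
    have mS: "m \<in> S" unfolding m_def using fS False by simp
    have "S = {1..m}"
    proof
      show "S \<subseteq> {1..m}"
      proof
        fix a assume a: "a \<in> S"
        then have "a \<le> m" unfolding m_def using fS by simp
        moreover have "0 < a" using a part_pos[OF P] unfolding S_def by auto
        ultimately show "a \<in> {1..m}" by simp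
      qed
      show "{1..m} \<subseteq> S"
      proof
        fix a assume "a \<in> {1..m}"
        then show "a \<in> S" using part_down[OF P, of m y a y] mS y unfolding S_def by auto
      qed
    qed
    then show ?thesis by simp
  qed
  then show ?thesis unfolding S_def row_len_def .
qed

lemma mem_iff:
  assumes P: "is_partition lam"
  shows "(x,y) \<in> lam \<longleftrightarrow> 0 < x \<and> 0 < y \<and> x \<le> row_len lam y"
proof (cases "0 < y")
  case True
  have "(x,y) \<in> lam \<longleftrightarrow> x \<in> {x. (x,y) \<in> lam}" by simp
  also have "\<dots> \<longleftrightarrow> x \<in> {1..row_len lam y}" by (simp only: row_set[OF P True])
  finally show ?thesis using True by auto
next
  case False
  then show ?thesis using part_pos[OF P, of x y] by blast
qed

lemma row_len_mono:
  assumes P: "is_partition lam" and "0 < y" "y \<le> y'"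
  shows "row_len lam y' \<le> row_len lam y"
proof (cases "row_len lam y' = 0")
  case True then show ?thesis by simp
next
  case False
  then have "(row_len lam y', y') \<in> lam" using mem_iff[OF P] assms by auto
  then have "(row_len lam y', y) \<in> lam" using part_down[OF P] assms False by auto
  then show ?thesis using mem_iff[OF P] by auto
qed

lemma row_bound:
  assumes P: "is_partition lam" and c: "(x,y) \<in> lam"
  shows "y \<le> card lam"
proof -
  have "(\<lambda>t. (1::nat, t)) ` {1..y} \<subseteq> lam"
    using part_down[OF P c] part_pos[OF P c] by auto
  then have "card ((\<lambda>t. (1::nat, t)) ` {1..y}) \<le> card lam"
    using part_finite[OF P] card_mono by blast
  moreover have "card ((\<lambda>t. (1::nat, t)) ` {1..y}) = y"
    by (subst card_image) (auto simp: inj_on_def)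
  ultimately show ?thesis by simp
qed

lemma row_len_0:
  assumes P: "is_partition lam" shows "row_len lam 0 = 0"
proof -
  have "{x. (x,0) \<in> lam} = {}" using part_pos[OF P] by blast
  then show ?thesis unfolding row_len_def by simp
qed

lemma row_len_zero:
  assumes P: "is_partition lam" and K: "\<forall>(a,b)\<in>lam. b < K" and y: "K \<le> y"
  shows "row_len lam y = 0"
proof (rule ccontr)
  assume "row_len lam y \<noteq> 0"
  then have "(1, y) \<in> lam" using mem_iff[OF P, of 1 y] row_len_0[OF P] by (cases "y = 0") auto
  then show False using K y by auto
qed

lemma card_rows:
  assumes P: "is_partition lam" and K: "\<forall>(a,b)\<in>lam. b \<le> K"
  shows "card lam = (\<Sum>y\<in>{1..K}. row_len lam y)"
proof -
  have "lam = (\<lambda>(y,x). (x,y)) ` (SIGMA y:{1..K}. {1..row_len lam y})"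
  proof (rule set_eqI)
    fix c show "c \<in> lam \<longleftrightarrow> c \<in> (\<lambda>(y,x). (x,y)) ` (SIGMA y:{1..K}. {1..row_len lam y})"
    proof (cases c)
      case (Pair a b)
      show ?thesis
      proof
        assume "c \<in> lam"
        then have ab: "(a,b) \<in> lam" using Pair by simp
        then have "b \<in> {1..K}" "a \<in> {1..row_len lam b}" using mem_iff[OF P, of a b] K by auto
        then have "(b,a) \<in> (SIGMA y:{1..K}. {1..row_len lam y})" by simp
        then show "c \<in> (\<lambda>(y,x). (x,y)) ` (SIGMA y:{1..K}. {1..row_len lam y})"
          unfolding Pair by (rule image_eqI[rotated]) simp
      next
        assume "c \<in> (\<lambda>(y,x). (x,y)) ` (SIGMA y:{1..K}. {1..row_len lam y})"
        then obtain y x where "(y,x) \<in> (SIGMA y:{1..K}. {1..row_len lam y})" "c = (x,y)" by auto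
        then show "c \<in> lam" using mem_iff[OF P, of x y] by auto
      qed
    qed
  qed
  moreover have "inj_on (\<lambda>(y,x). (x,y)) (SIGMA y:{1..K}. {1..row_len lam y})"
    by (auto simp: inj_on_def)
  ultimately have "card lam = card (SIGMA y:{1..K}. {1..row_len lam y})"
    by (metis card_image)
  also have "\<dots> = (\<Sum>y\<in>{1..K}. card {1..row_len lam y})" by (rule card_SigmaI) auto
  finally show ?thesis by simp
qed


definition Add :: "cell set \<Rightarrow> nat set" where
  "Add lam = {i. 0 < i \<and> (i = 1 \<or> row_len lam i < row_len lam (i - 1))}"

definition Rem :: "cell set \<Rightarrow> nat set" where
  "Rem lam = {j. 0 < j \<and> 0 < row_len lam j \<and> row_len lam (Suc j) < row_len lam j}"

abbreviation addc :: "cell set \<Rightarrow> nat \<Rightarrow> cell" where "addc lam i \<equiv> (row_len lam i + 1, i)"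
abbreviation remc :: "cell set \<Rightarrow> nat \<Rightarrow> cell" where "remc lam j \<equiv> (row_len lam j, j)"

lemma addc_notin: "is_partition lam \<Longrightarrow> addc lam i \<notin> lam"
  using mem_iff by auto

lemma remc_in: "is_partition lam \<Longrightarrow> j \<in> Rem lam \<Longrightarrow> remc lam j \<in> lam"
  using mem_iff unfolding Rem_def by auto

lemma up_part:
  assumes P: "is_partition lam" and i: "i \<in> Add lam"
  shows "is_partition (insert (addc lam i) lam)"
  unfolding is_partition_def
proof (intro conjI)
  show "finite (insert (addc lam i) lam)" using part_finite[OF P] by simp
  show "\<forall>(x, y)\<in>insert (addc lam i) lam. 0 < x \<and> 0 < y" using part_pos[OF P] i unfolding Add_def by auto
  have dc: "(x', y') \<in> insert (addc lam i) lam"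
    if c: "(x,y) \<in> insert (addc lam i) lam" and h': "0 < x'" "x' \<le> x" "0 < y'" "y' \<le> y" for x y x' y'
  proof (cases "(x,y) \<in> lam")
    case True then show ?thesis using part_down[OF P, of x y x' y'] h' by auto
  next
    case False
    then have cc: "x = row_len lam i + 1" "y = i" using c by auto
    show ?thesis
    proof (cases "y' = i")
      case True
      then show ?thesis using h' cc mem_iff[OF P, of x' i] by auto
    next
      case False
      then have y'i: "y' < i" "i \<noteq> 1" using h' cc by auto
      then have "row_len lam i < row_len lam (i - 1)" using i unfolding Add_def by auto
      moreover have "row_len lam (i - 1) \<le> row_len lam y'"
        by (rule row_len_mono[OF P]) (use h' y'i in auto)
      ultimately have "x' \<le> row_len lam y'" using h' cc by auto
      then show ?thesis using mem_iff[OF P, of x' y'] h' by auto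
    qed
  qed
  then show "\<forall>(x, y)\<in>insert (addc lam i) lam. \<forall>x' y'. 0 < x' \<and> x' \<le> x \<and> 0 < y' \<and> y' \<le> y \<longrightarrow> (x', y') \<in> insert (addc lam i) lam"
    by blast
qed

lemma down_part:
  assumes P: "is_partition lam" and j: "j \<in> Rem lam"
  shows "is_partition (lam - {remc lam j})"
  unfolding is_partition_def
proof (intro conjI)
  show "finite (lam - {remc lam j})" using part_finite[OF P] by simp
  show "\<forall>(x, y)\<in>lam - {remc lam j}. 0 < x \<and> 0 < y" using part_pos[OF P] by auto
  have dc: "(x', y') \<in> lam - {remc lam j}"
    if c: "(x,y) \<in> lam - {remc lam j}" and h': "0 < x'" "x' \<le> x" "0 < y'" "y' \<le> y" for x y x' y'
  proof -
    have inl: "(x', y') \<in> lam" using part_down[OF P, of x y x' y'] h' c by auto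
    have xy: "(x,y) \<in> lam" "(x,y) \<noteq> remc lam j" using c by auto
    have "(x', y') \<noteq> remc lam j"
    proof
      assume e: "(x', y') = remc lam j"
      have xr: "x \<le> row_len lam y" using mem_iff[OF P] xy(1) by auto
      show False
      proof (cases "y = j")
        case True
        then show False using e h' xr xy(2) by auto
      next
        case False
        then have "y \<ge> Suc j" using e h' by auto
        then have "row_len lam y \<le> row_len lam (Suc j)" by (intro row_len_mono[OF P]) auto
        moreover have "row_len lam (Suc j) < row_len lam j" using j unfolding Rem_def by auto
        ultimately show False using e h' xr by auto
      qed
    qed
    then show ?thesis using inl by auto
  qed
  then show "\<forall>(x, y)\<in>lam - {remc lam j}. \<forall>x' y'. 0 < x' \<and> x' \<le> x \<and> 0 < y' \<and> y' \<le> y \<longrightarrow> (x', y') \<in> lam - {remc lam j}"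
    by blast
qed

lemma up_set_eq:
  assumes P: "is_partition lam"
  shows "up_set lam = (\<lambda>i. insert (addc lam i) lam) ` Add lam"
proof
  show "(\<lambda>i. insert (addc lam i) lam) ` Add lam \<subseteq> up_set lam"
  proof
    fix nu assume "nu \<in> (\<lambda>i. insert (addc lam i) lam) ` Add lam"
    then obtain i where i: "i \<in> Add lam" "nu = insert (addc lam i) lam" by auto
    have "nu - lam = {addc lam i}" using i(2) addc_notin[OF P] by auto
    then show "nu \<in> up_set lam" unfolding up_set_def using up_part[OF P i(1)] i(2) by auto
  qed
  show "up_set lam \<subseteq> (\<lambda>i. insert (addc lam i) lam) ` Add lam"
  proof
    fix nu assume nu: "nu \<in> up_set lam"
    then have Pn: "is_partition nu" and sub: "lam \<subseteq> nu" and c1: "card (nu - lam) = 1"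
      unfolding up_set_def by auto
    obtain c where c: "nu - lam = {c}" using c1 card_1_singletonE by blast
    obtain a b where cab: "c = (a,b)" by (cases c)
    have cn: "(a,b) \<in> nu" "(a,b) \<notin> lam" using c cab by auto
    have nu_eq: "nu = insert (a,b) lam" using c cab sub by auto
    have ab: "0 < a" "0 < b" using part_pos[OF Pn cn(1)] by auto
    have a_gt: "row_len lam b < a" using cn(2) mem_iff[OF P, of a b] ab by auto
    have a_eq: "a = row_len lam b + 1"
    proof (cases "a = 1")
      case True then show ?thesis using a_gt by simp
    next
      case False
      then have "(a - 1, b) \<in> nu" using part_down[OF Pn cn(1), of "a - 1" b] ab by auto
      moreover have "(a - 1, b) \<noteq> (a, b)" using ab by auto
      ultimately have "(a - 1, b) \<in> lam" using nu_eq by auto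
      then have "a - 1 \<le> row_len lam b" using mem_iff[OF P] by auto
      then show ?thesis using a_gt by auto
    qed
    have bA: "b \<in> Add lam"
    proof (cases "b = 1")
      case True then show ?thesis unfolding Add_def by simp
    next
      case False
      then have "(a, b - 1) \<in> nu" using part_down[OF Pn cn(1), of a "b - 1"] ab by auto
      moreover have "(a, b - 1) \<noteq> (a, b)" using ab by auto
      ultimately have "(a, b - 1) \<in> lam" using nu_eq by auto
      then have "a \<le> row_len lam (b - 1)" using mem_iff[OF P] by auto
      then show ?thesis unfolding Add_def using a_eq ab by auto
    qed
    show "nu \<in> (\<lambda>i. insert (addc lam i) lam) ` Add lam"
      using bA nu_eq a_eq by auto
  qed
qed

lemma up_inj: "is_partition lam \<Longrightarrow> inj_on (\<lambda>i. insert (addc lam i) lam) (Add lam)"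
proof (rule inj_onI)
  fix i i' assume P: "is_partition lam" and e: "insert (addc lam i) lam = insert (addc lam i') lam"
  have "addc lam i \<in> insert (addc lam i') lam" using e by blast
  then have "addc lam i = addc lam i'" using addc_notin[OF P] by blast
  then show "i = i'" by simp
qed

lemma down_set_eq:
  assumes P: "is_partition lam"
  shows "down_set lam = (\<lambda>j. lam - {remc lam j}) ` Rem lam"
proof
  show "(\<lambda>j. lam - {remc lam j}) ` Rem lam \<subseteq> down_set lam"
  proof
    fix mu assume "mu \<in> (\<lambda>j. lam - {remc lam j}) ` Rem lam"
    then obtain j where j: "j \<in> Rem lam" "mu = lam - {remc lam j}" by auto
    have "lam - mu = {remc lam j}" using j(2) remc_in[OF P j(1)] by auto
    then show "mu \<in> down_set lam" unfolding down_set_def using down_part[OF P j(1)] j(2) by auto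
  qed
  show "down_set lam \<subseteq> (\<lambda>j. lam - {remc lam j}) ` Rem lam"
  proof
    fix mu assume mu: "mu \<in> down_set lam"
    then have Pm: "is_partition mu" and sub: "mu \<subseteq> lam" and c1: "card (lam - mu) = 1"
      unfolding down_set_def by auto
    obtain c where c: "lam - mu = {c}" using c1 card_1_singletonE by blast
    obtain a b where cab: "c = (a,b)" by (cases c)
    have cn: "(a,b) \<in> lam" "(a,b) \<notin> mu" using c cab by auto
    have mu_eq: "mu = lam - {(a,b)}" using c cab sub by auto
    have ab: "0 < a" "0 < b" "a \<le> row_len lam b" using mem_iff[OF P] cn(1) by auto
    have a_eq: "a = row_len lam b"
    proof (rule ccontr)
      assume "a \<noteq> row_len lam b"
      then have "(a + 1, b) \<in> lam" using ab mem_iff[OF P, of "a + 1" b] by auto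
      then have "(a + 1, b) \<in> mu" using mu_eq by auto
      then have "(a, b) \<in> mu" using part_down[OF Pm, of "a + 1" b a b] ab by auto
      then show False using cn by auto
    qed
    have bR: "b \<in> Rem lam"
    proof -
      have "row_len lam (Suc b) < row_len lam b"
      proof (rule ccontr)
        assume "\<not> row_len lam (Suc b) < row_len lam b"
        then have "(a, Suc b) \<in> lam" using ab a_eq mem_iff[OF P, of a "Suc b"] by auto
        then have "(a, Suc b) \<in> mu" using mu_eq by auto
        then have "(a, b) \<in> mu" using part_down[OF Pm, of a "Suc b" a b] ab by auto
        then show False using cn by auto
      qed
      then show ?thesis unfolding Rem_def using ab a_eq by auto
    qed
    show "mu \<in> (\<lambda>j. lam - {remc lam j}) ` Rem lam"
      using bR mu_eq a_eq by auto
  qed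
qed

lemma down_inj: "is_partition lam \<Longrightarrow> inj_on (\<lambda>j. lam - {remc lam j}) (Rem lam)"
proof (rule inj_onI)
  fix j j' assume P: "is_partition lam" and j: "j \<in> Rem lam" "j' \<in> Rem lam"
    and e: "lam - {remc lam j} = lam - {remc lam j'}"
  have "remc lam j \<notin> lam - {remc lam j'}" using e by blast
  then have "remc lam j = remc lam j'" using remc_in[OF P j(1)] by blast
  then show "j = j'" by simp
qed

lemma row_len_up:
  assumes P: "is_partition lam" and i: "i \<in> Add lam"
  shows "row_len (insert (addc lam i) lam) = (row_len lam)(i := row_len lam i + 1)"
proof
  fix y
  have e: "{x. (x,y) \<in> insert (addc lam i) lam} = (if y = i then insert (row_len lam i + 1) {x. (x,y) \<in> lam} else {x. (x,y) \<in> lam})"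
    by auto
  show "row_len (insert (addc lam i) lam) y = ((row_len lam)(i := row_len lam i + 1)) y"
  proof (cases "y = i")
    case True
    have "0 < i" using i unfolding Add_def by auto
    then have S: "{x. (x,i) \<in> lam} = {1..row_len lam i}" using row_set[OF P] by blast
    have "row_len (insert (addc lam i) lam) y = card (insert (row_len lam i + 1) {1..row_len lam i})"
      unfolding row_len_def[of "insert (addc lam i) lam"] e using True S by simp
    then show ?thesis using True by simp
  next
    case False
    then show ?thesis unfolding row_len_def[of "insert (addc lam i) lam"] e by (simp add: row_len_def)
  qed
qed

lemma row_len_down:
  assumes P: "is_partition lam" and j: "j \<in> Rem lam"
  shows "row_len (lam - {remc lam j}) = (row_len lam)(j := row_len lam j - 1)"
proof
  fix y
  have e: "{x. (x,y) \<in> lam - {remc lam j}} = (if y = j then {x. (x,y) \<in> lam} - {row_len lam j} else {x. (x,y) \<in> lam})"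
    by auto
  show "row_len (lam - {remc lam j}) y = ((row_len lam)(j := row_len lam j - 1)) y"
  proof (cases "y = j")
    case True
    have "0 < j" using j unfolding Rem_def by auto
    then have S: "{x. (x,j) \<in> lam} = {1..row_len lam j}" using row_set[OF P] by blast
    have "row_len (lam - {remc lam j}) y = card ({1..row_len lam j} - {row_len lam j})"
      unfolding row_len_def[of "lam - {remc lam j}"] e using True S by simp
    then show ?thesis using True j unfolding Rem_def by simp
  next
    case False
    then show ?thesis unfolding row_len_def[of "lam - {remc lam j}"] e by (simp add: row_len_def)
  qed
qed


lemma syt_empty: "num_syt {} = 1"
proof -
  have "syt {} = {\<lambda>_. undefined}"
    unfolding syt_def by (auto simp: bij_betw_def)
  then show ?thesis unfolding num_syt_def by simp
qed

lemma syt_finite: "finite lam \<Longrightarrow> finite (syt lam)"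
proof -
  assume f: "finite lam"
  have "syt lam \<subseteq> lam \<rightarrow>\<^sub>E {1..card lam}" unfolding syt_def by auto
  moreover have "finite (lam \<rightarrow>\<^sub>E {1..card lam})" using f by (simp add: finite_PiE)
  ultimately show ?thesis by (rule finite_subset)
qed

lemma syt_max_corner:
  assumes P: "is_partition lam" and T: "T \<in> syt lam" and c: "c \<in> lam" and Tc: "T c = card lam"
  shows "is_partition (lam - {c})"
proof -
  have Tr: "\<And>d. d \<in> lam \<Longrightarrow> T d \<in> {1..card lam}" using T unfolding syt_def by (auto simp: PiE_iff)
  have ord: "\<And>d e. d \<in> lam \<Longrightarrow> e \<in> lam \<Longrightarrow> fst d \<le> fst e \<Longrightarrow> snd d \<le> snd e \<Longrightarrow> d \<noteq> e \<Longrightarrow> T d < T e"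
    using T unfolding syt_def by auto
  have dc: "(x', y') \<in> lam - {c}" if xy: "(x,y) \<in> lam - {c}" and h: "0 < x'" "x' \<le> x" "0 < y'" "y' \<le> y" for x y x' y'
  proof -
    have "(x',y') \<in> lam" using part_down[OF P, of x y x' y'] xy h by auto
    moreover have "(x',y') \<noteq> c"
    proof
      assume e: "(x',y') = c"
      have ne: "c \<noteq> (x,y)" using xy by auto
      have xyl: "(x,y) \<in> lam" using xy by auto
      have "T c < T (x,y)" using ord[OF c xyl] ne h e by auto
      moreover have "T (x,y) \<le> card lam" using Tr[of "(x,y)"] xy by auto
      ultimately show False using Tc by simp
    qed
    ultimately show ?thesis by simp
  qed
  show ?thesis unfolding is_partition_def
  proof (intro conjI)
    show "finite (lam - {c})" using part_finite[OF P] by simp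
    show "\<forall>(x, y)\<in>lam - {c}. 0 < x \<and> 0 < y" using part_pos[OF P] by auto
    show "\<forall>(x, y)\<in>lam - {c}. \<forall>x' y'. 0 < x' \<and> x' \<le> x \<and> 0 < y' \<and> y' \<le> y \<longrightarrow> (x', y') \<in> lam - {c}"
      using dc by blast
  qed
qed

lemma syt_restrict_bij:
  assumes P: "is_partition lam" and c: "c \<in> lam" and PA: "is_partition (lam - {c})"
  shows "bij_betw (\<lambda>T. restrict T (lam - {c})) {T \<in> syt lam. T c = card lam} (syt (lam - {c}))"
proof -
  define A where "A = lam - {c}"
  define n where "n = card lam"
  have fl: "finite lam" using part_finite[OF P] .
  have n0: "card lam > 0" using fl c by (auto simp: card_gt_0_iff)
  have cA: "card A = n - 1" "n \<ge> 1" unfolding A_def n_def using fl c n0 by auto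
  have lamA: "lam = insert c A" "c \<notin> A" unfolding A_def using c by auto
  show ?thesis
    unfolding bij_betw_def
  proof (intro conjI)
    show "inj_on (\<lambda>T. restrict T (lam - {c})) {T \<in> syt lam. T c = card lam}"
    proof (rule inj_onI)
      fix T1 T2 assume T1: "T1 \<in> {T \<in> syt lam. T c = card lam}" and T2: "T2 \<in> {T \<in> syt lam. T c = card lam}"
        and e: "restrict T1 (lam - {c}) = restrict T2 (lam - {c})"
      have ex: "T1 \<in> extensional lam" "T2 \<in> extensional lam" using T1 T2 unfolding syt_def by (auto simp: PiE_iff)
      show "T1 = T2"
      proof
        fix d
        show "T1 d = T2 d"
        proof (cases "d \<in> lam - {c}")
          case True then show ?thesis using fun_cong[OF e, of d] by simp
        next
          case False
          then have "d = c \<or> d \<notin> lam" by auto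
          then show ?thesis using T1 T2 extensional_arb[OF ex(1), of d] extensional_arb[OF ex(2), of d] by auto
        qed
      qed
    qed
    show "(\<lambda>T. restrict T (lam - {c})) ` {T \<in> syt lam. T c = card lam} = syt (lam - {c})"
    proof
      show "(\<lambda>T. restrict T (lam - {c})) ` {T \<in> syt lam. T c = card lam} \<subseteq> syt (lam - {c})"
      proof
        fix T' assume "T' \<in> (\<lambda>T. restrict T (lam - {c})) ` {T \<in> syt lam. T c = card lam}"
        then obtain T where T: "T \<in> syt lam" "T c = n" and T': "T' = restrict T A"
          unfolding A_def n_def by auto
        have Tpi: "\<And>d. d \<in> lam \<Longrightarrow> T d \<in> {1..n}" using T unfolding syt_def n_def by (auto simp: PiE_iff)
        have bij: "bij_betw T lam {1..n}" using T unfolding syt_def n_def by auto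
        have ord: "\<And>d e. d \<in> lam \<Longrightarrow> e \<in> lam \<Longrightarrow> fst d \<le> fst e \<Longrightarrow> snd d \<le> snd e \<Longrightarrow> d \<noteq> e \<Longrightarrow> T d < T e"
          using T unfolding syt_def by auto
        have injT: "inj_on T lam" using bij by (simp add: bij_betw_def)
        have imgA: "T ` A = {1..n - 1}"
        proof -
          have "T ` A = T ` lam - T ` {c}" unfolding A_def by (rule inj_on_image_set_diff[OF injT]) (use c in auto)
          also have "T ` lam = {1..n}" using bij by (simp add: bij_betw_def)
          finally show ?thesis using T(2) cA by auto
        qed
        have "T' \<in> syt A"
          unfolding syt_def
        proof (intro CollectI conjI)
          show "T' \<in> A \<rightarrow>\<^sub>E {1..card A}" unfolding T' cA(1) using imgA by auto
          have "inj_on T A" by (rule inj_on_subset[OF injT]) (auto simp: A_def)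
          then have "inj_on T' A" unfolding T' by (simp add: inj_on_def)
          moreover have "T' ` A = {1..card A}" unfolding T' cA(1) using imgA by simp
          ultimately show "bij_betw T' A {1..card A}" by (simp add: bij_betw_def)
          show "\<forall>d\<in>A. \<forall>e\<in>A. fst d \<le> fst e \<and> snd d \<le> snd e \<and> d \<noteq> e \<longrightarrow> T' d < T' e"
            unfolding T' using ord unfolding A_def by auto
        qed
        then show "T' \<in> syt (lam - {c})" unfolding A_def .
      qed
      show "syt (lam - {c}) \<subseteq> (\<lambda>T. restrict T (lam - {c})) ` {T \<in> syt lam. T c = card lam}"
      proof
        fix T' assume T'0: "T' \<in> syt (lam - {c})"
        then have T': "T' \<in> syt A" unfolding A_def .
        have T'pi: "\<And>d. d \<in> A \<Longrightarrow> T' d \<in> {1..n - 1}" using T' unfolding syt_def cA(1) by (auto simp: PiE_iff)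
        have T'ex: "\<And>d. d \<notin> A \<Longrightarrow> T' d = undefined" using T' unfolding syt_def by (auto simp: PiE_iff extensional_def)
        have bij': "bij_betw T' A {1..n - 1}" using T' unfolding syt_def cA(1) by auto
        have ord': "\<And>d e. d \<in> A \<Longrightarrow> e \<in> A \<Longrightarrow> fst d \<le> fst e \<Longrightarrow> snd d \<le> snd e \<Longrightarrow> d \<noteq> e \<Longrightarrow> T' d < T' e"
          using T' unfolding syt_def by auto
        define T where "T = T'(c := n)"
        have res: "restrict T A = T'"
        proof
          fix d show "restrict T A d = T' d"
            using T'ex lamA(2) unfolding T_def by (cases "d \<in> A") auto
        qed
        have TA: "\<And>d. d \<in> A \<Longrightarrow> T d = T' d" unfolding T_def using lamA(2) by auto
        have "T \<in> syt lam"
          unfolding syt_def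
        proof (intro CollectI conjI)
          show "T \<in> lam \<rightarrow>\<^sub>E {1..card lam}"
          proof (rule PiE_I)
            fix d assume d: "d \<in> lam"
            show "T d \<in> {1..card lam}"
            proof (cases "d = c")
              case True then show ?thesis using cA unfolding T_def n_def by simp
            next
              case False
              then have dA: "d \<in> A" using d lamA by auto
              have "T' d \<in> {1..n - 1}" by (rule T'pi[OF dA])
              then show ?thesis using TA[OF dA] unfolding n_def by auto
            qed
          next
            fix d assume "d \<notin> lam"
            then show "T d = undefined" using T'ex lamA unfolding T_def by auto
          qed
          have injT': "inj_on T' A" using bij' by (simp add: bij_betw_def)
          have imgT': "T' ` A = {1..n - 1}" using bij' by (simp add: bij_betw_def)
          have "inj_on T A" using injT' TA by (simp add: inj_on_def)
          moreover have "T c \<notin> T ` A" using TA imgT' cA unfolding T_def by auto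
          ultimately have "inj_on T lam" unfolding lamA(1) by auto
          moreover have "T ` lam = {1..card lam}"
          proof -
            have "T ` A = T' ` A" using TA by (rule image_cong[OF refl])
            moreover have "T c = n" unfolding T_def by simp
            ultimately have "T ` lam = insert n (T' ` A)" unfolding lamA(1) by simp
            also have "\<dots> = {1..n}" unfolding imgT' using cA by auto
            finally show ?thesis unfolding n_def .
          qed
          ultimately show "bij_betw T lam {1..card lam}" by (simp add: bij_betw_def)
          show "\<forall>d\<in>lam. \<forall>e\<in>lam. fst d \<le> fst e \<and> snd d \<le> snd e \<and> d \<noteq> e \<longrightarrow> T d < T e"
          proof (intro ballI impI)
            fix d e assume d: "d \<in> lam" and e: "e \<in> lam" and h: "fst d \<le> fst e \<and> snd d \<le> snd e \<and> d \<noteq> e"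
            show "T d < T e"
            proof (cases "e = c")
              case True
              then have "d \<in> A" using d h lamA by auto
              then show ?thesis using True TA T'pi cA unfolding T_def by fastforce
            next
              case False
              then have eA: "e \<in> A" using e lamA by auto
              show ?thesis
              proof (cases "d = c")
                case True
                obtain a b where ab: "e = (a,b)" by (cases e)
                obtain a' b' where ab': "c = (a',b')" by (cases c)
                have "(a',b') \<in> A"
                  using part_down[OF PA, of a b a' b'] eA ab ab' h True part_pos[OF P, of a' b'] c
                  unfolding A_def by auto
                then show ?thesis using ab' lamA by auto
              next
                case False
                then have "d \<in> A" using d lamA by auto
                then show ?thesis using ord'[OF _ eA] h TA eA by auto
              qed
            qed
          qed
        qed
        moreover have "T c = card lam" unfolding T_def n_def by simp
        ultimately show "T' \<in> (\<lambda>T. restrict T (lam - {c})) ` {T \<in> syt lam. T c = card lam}"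
          using res unfolding A_def by (auto intro!: image_eqI[where x=T])
      qed
    qed
  qed
qed

lemma syt_rec:
  assumes P: "is_partition lam" and ne: "lam \<noteq> {}"
  shows "num_syt lam = (\<Sum>mu\<in>down_set lam. num_syt mu)"
proof -
  define C where "C = {c\<in>lam. is_partition (lam - {c})}"
  define S where "S c = {T \<in> syt lam. T c = card lam}" for c
  have fl: "finite lam" using part_finite[OF P] .
  have fC: "finite C" unfolding C_def using fl by simp
  have U: "syt lam = (\<Union>c\<in>C. S c)"
  proof
    show "syt lam \<subseteq> (\<Union>c\<in>C. S c)"
    proof
      fix T assume T: "T \<in> syt lam"
      have "bij_betw T lam {1..card lam}" using T unfolding syt_def by auto
      then have "T ` lam = {1..card lam}" by (simp add: bij_betw_def)
      moreover have "card lam \<in> {1..card lam}" using fl ne by (simp add: card_gt_0_iff Suc_leI)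
      ultimately have "card lam \<in> T ` lam" by simp
      then obtain c where c: "c \<in> lam" "T c = card lam" by (metis imageE)
      have "c \<in> C" unfolding C_def using syt_max_corner[OF P T c] c by simp
      then show "T \<in> (\<Union>c\<in>C. S c)" using T c unfolding S_def by auto
    qed
    show "(\<Union>c\<in>C. S c) \<subseteq> syt lam" unfolding S_def by auto
  qed
  have disj: "\<forall>c\<in>C. \<forall>c'\<in>C. c \<noteq> c' \<longrightarrow> S c \<inter> S c' = {}"
  proof (intro ballI impI)
    fix c c' assume c: "c \<in> C" "c' \<in> C" "c \<noteq> c'"
    show "S c \<inter> S c' = {}"
    proof (rule ccontr)
      assume "S c \<inter> S c' \<noteq> {}"
      then obtain T where T: "T \<in> syt lam" "T c = card lam" "T c' = card lam" unfolding S_def by auto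
      have "inj_on T lam" using T(1) unfolding syt_def by (auto simp: bij_betw_def)
      moreover have "c \<in> lam" "c' \<in> lam" using c unfolding C_def by auto
      ultimately have "c = c'" using T(2,3) inj_onD by metis
      then show False using c by simp
    qed
  qed
  have fS: "\<forall>c\<in>C. finite (S c)" unfolding S_def using syt_finite[OF fl] by auto
  have "num_syt lam = (\<Sum>c\<in>C. card (S c))"
    unfolding num_syt_def U by (rule card_UN_disjoint[OF fC fS disj])
  also have "\<dots> = (\<Sum>c\<in>C. num_syt (lam - {c}))"
  proof (rule sum.cong)
    fix c assume "c \<in> C"
    then have c: "c \<in> lam" "is_partition (lam - {c})" unfolding C_def by auto
    show "card (S c) = num_syt (lam - {c})"
      unfolding S_def num_syt_def by (rule bij_betw_same_card[OF syt_restrict_bij[OF P c]])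
  qed simp
  also have "\<dots> = (\<Sum>mu\<in>down_set lam. num_syt mu)"
  proof -
    have D: "down_set lam = (\<lambda>c. lam - {c}) ` C"
    proof
      show "down_set lam \<subseteq> (\<lambda>c. lam - {c}) ` C"
      proof
        fix mu assume mu: "mu \<in> down_set lam"
        then have Pm: "is_partition mu" and sub: "mu \<subseteq> lam" and c1: "card (lam - mu) = 1"
          unfolding down_set_def by auto
        obtain c where c: "lam - mu = {c}" using c1 card_1_singletonE by blast
        have "mu = lam - {c}" "c \<in> lam" using c sub by auto
        then show "mu \<in> (\<lambda>c. lam - {c}) ` C" unfolding C_def using Pm by auto
      qed
      show "(\<lambda>c. lam - {c}) ` C \<subseteq> down_set lam"
      proof
        fix mu assume "mu \<in> (\<lambda>c. lam - {c}) ` C"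
        then obtain c where c: "c \<in> C" "mu = lam - {c}" by auto
        have "lam - mu = {c}" using c unfolding C_def by auto
        then show "mu \<in> down_set lam" unfolding down_set_def using c unfolding C_def by auto
      qed
    qed
    have I: "inj_on (\<lambda>c. lam - {c}) C"
    proof (rule inj_onI)
      fix c c' assume "c \<in> C" "c' \<in> C" "lam - {c} = lam - {c'}"
      then show "c = c'" unfolding C_def by blast
    qed
    show ?thesis unfolding D by (simp add: sum.reindex[OF I])
  qed
  finally show ?thesis .
qed


lemma gauss_real: "(\<Sum>i\<in>{1..K}. real (K - i)) = real K * (real K - 1) / 2"
proof (induction K)
  case 0 then show ?case by simp
next
  case (Suc K)
  have "(\<Sum>i\<in>{1..Suc K}. real (Suc K - i)) = real (Suc K - Suc K) + (\<Sum>i\<in>{1..K}. real (Suc K - i))"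
    by (simp add: atLeastAtMostSuc_conv)
  also have "(\<Sum>i\<in>{1..K}. real (Suc K - i)) = (\<Sum>i\<in>{1..K}. real (K - i) + 1)"
    by (rule sum.cong) (auto simp: Suc_diff_le)
  also have "\<dots> = (\<Sum>i\<in>{1..K}. real (K - i)) + real K" by (simp add: sum.distrib)
  finally show ?case using Suc.IH by (simp add: field_simps)
qed

lemma xv_strict:
  assumes P: "is_partition lam" and i: "i \<in> {1..K}" "i' \<in> {1..K}" "i < i'"
  shows "xv K (row_len lam) i' < xv K (row_len lam) i"
proof -
  have "row_len lam i' \<le> row_len lam i" by (rule row_len_mono[OF P]) (use i in auto)
  then show ?thesis unfolding xv_def using i by auto
qed

lemma xv_inj:
  assumes P: "is_partition lam"
  shows "inj_on (xv K (row_len lam)) {1..K}"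
proof (rule inj_onI)
  fix i i' assume i: "i \<in> {1..K}" "i' \<in> {1..K}" and e: "xv K (row_len lam) i = xv K (row_len lam) i'"
  show "i = i'"
  proof (rule ccontr)
    assume "i \<noteq> i'"
    then have "i < i' \<or> i' < i" by auto
    then show False using xv_strict[OF P i] xv_strict[OF P i(2) i(1)] e by auto
  qed
qed

lemma sum_xv:
  "(\<Sum>i\<in>{1..K}. xv K v i) = real (\<Sum>i\<in>{1..K}. v i) + real K * (real K - 1) / 2"
proof -
  have "(\<Sum>i\<in>{1..K}. xv K v i) = (\<Sum>i\<in>{1..K}. real (v i) + real (K - i))"
    unfolding xv_def by (rule sum.cong) auto
  also have "\<dots> = real (\<Sum>i\<in>{1..K}. v i) + (\<Sum>i\<in>{1..K}. real (K - i))" by (simp add: sum.distrib)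
  finally show ?thesis using gauss_real by simp
qed

lemma Rem_sub:
  assumes P: "is_partition lam" and K: "\<forall>(a,b)\<in>lam. b < K"
  shows "Rem lam \<subseteq> {1..K}"
proof
  fix j assume j: "j \<in> Rem lam"
  then have "0 < j" "0 < row_len lam j" unfolding Rem_def by auto
  moreover have "j < K"
  proof (rule ccontr)
    assume "\<not> j < K"
    then have "row_len lam j = 0" using row_len_zero[OF P K] by simp
    then show False using \<open>0 < row_len lam j\<close> by simp
  qed
  ultimately show "j \<in> {1..K}" by simp
qed

lemma Dalg_nonRem:
  assumes P: "is_partition lam" and K: "\<forall>(a,b)\<in>lam. b < K" and j: "j \<in> {1..K}" "j \<notin> Rem lam"
  shows "Dalg K (xv K (row_len lam)) N j = 0"
proof -
  let ?v = "row_len lam" and ?x = "xv K (row_len lam)"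
  have "?x j * (\<Prod>m\<in>{1..K}-{j}. ?x j - 1 - ?x m) = 0"
  proof (cases "j = K")
    case True
    then have "?v j = 0" using row_len_zero[OF P K] by simp
    then have "?x j = 0" unfolding xv_def using True by simp
    then show ?thesis by simp
  next
    case False
    then have jK: "Suc j \<in> {1..K}-{j}" using j by auto
    have mono: "?v (Suc j) \<le> ?v j" by (rule row_len_mono[OF P]) (use j in auto)
    have "?v (Suc j) = ?v j" using j mono unfolding Rem_def by auto
    then have "?x j - 1 - ?x (Suc j) = 0" unfolding xv_def using j False by (auto simp: of_nat_diff)
    then have "(\<Prod>m\<in>{1..K}-{j}. ?x j - 1 - ?x m) = 0"
      by (intro prod_zero) (use jK in auto)
    then show ?thesis by simp
  qed
  then show ?thesis unfolding Dalg_def by simp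
qed

lemma f_eq:
  "\<forall>lam. is_partition lam \<longrightarrow> (\<forall>(a,b)\<in>lam. b < K) \<longrightarrow> card lam = N \<longrightarrow>
     real (num_syt lam) = Phi K (row_len lam)"
proof (induction N)
  case 0
  show ?case
  proof (intro allI impI)
    fix lam assume P: "is_partition lam" and "\<forall>(a,b)\<in>lam. b < K" and c: "card lam = 0"
    then have "lam = {}" using part_finite[OF P] by simp
    moreover have "row_len {} = (\<lambda>_. 0)" unfolding row_len_def by auto
    ultimately show "real (num_syt lam) = Phi K (row_len lam)" using syt_empty Phi_zero by simp
  qed
next
  case (Suc N)
  show ?case
  proof (intro allI impI)
    fix lam assume P: "is_partition lam" and K: "\<forall>(a,b)\<in>lam. b < K" and c: "card lam = Suc N"
    let ?v = "row_len lam" and ?x = "xv K (row_len lam)"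
    have ne: "lam \<noteq> {}" using c by auto
    then obtain a b where ab: "(a,b) \<in> lam" by auto
    have K2: "K \<ge> 1" using K ab part_pos[OF P ab] by auto
    have sv: "(\<Sum>i\<in>{1..K}. ?v i) = Suc N"
      using card_rows[OF P, of K] K c by fastforce
    have inj: "inj_on ?x {1..K}" by (rule xv_inj[OF P])
    have RK: "Rem lam \<subseteq> {1..K}" by (rule Rem_sub[OF P K])
    have fR: "finite (Rem lam)" using RK finite_subset by blast
    have "real (num_syt lam) = real (\<Sum>mu\<in>down_set lam. num_syt mu)" using syt_rec[OF P ne] by simp
    also have "\<dots> = (\<Sum>mu\<in>down_set lam. real (num_syt mu))" by simp
    also have "\<dots> = (\<Sum>j\<in>Rem lam. real (num_syt (lam - {remc lam j})))"
      unfolding down_set_eq[OF P] by (simp add: sum.reindex[OF down_inj[OF P]])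
    also have "\<dots> = (\<Sum>j\<in>Rem lam. Phi K (?v(j := ?v j - 1)))"
    proof (rule sum.cong)
      fix j assume j: "j \<in> Rem lam"
      have Pm: "is_partition (lam - {remc lam j})" by (rule down_part[OF P j])
      have Km: "\<forall>(a,b)\<in>lam - {remc lam j}. b < K" using K by auto
      have cm: "card (lam - {remc lam j}) = N" using c remc_in[OF P j] part_finite[OF P] by simp
      show "real (num_syt (lam - {remc lam j})) = Phi K (?v(j := ?v j - 1))"
      proof -
        have "real (num_syt (lam - {remc lam j})) = Phi K (row_len (lam - {remc lam j}))"
          using Suc.IH Pm Km cm by blast
        then show ?thesis by (simp only: row_len_down[OF P j])
      qed
    qed simp
    also have "\<dots> = (\<Sum>j\<in>Rem lam. Phi K ?v * Dalg K ?x (Suc N) j)"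
    proof (rule sum.cong)
      fix j assume j: "j \<in> Rem lam"
      have jK: "j \<in> {1..K}" using j RK by auto
      have vj: "?v j \<ge> 1" using j unfolding Rem_def by auto
      show "Phi K (?v(j := ?v j - 1)) = Phi K ?v * Dalg K ?x (Suc N) j"
        using Phi_down[OF jK vj inj, unfolded sv] unfolding Dalg_def by simp
    qed simp
    also have "\<dots> = Phi K ?v * (\<Sum>j\<in>Rem lam. Dalg K ?x (Suc N) j)" by (simp add: sum_distrib_left)
    also have "(\<Sum>j\<in>Rem lam. Dalg K ?x (Suc N) j) = (\<Sum>j\<in>{1..K}. Dalg K ?x (Suc N) j)"
      by (rule sum.mono_neutral_left) (use RK Dalg_nonRem[OF P K] in auto)
    also have "\<dots> = 1"
    proof (rule sumD[OF K2 inj])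
      show "real (Suc N) = (\<Sum>i\<in>{1..K}. ?x i) - real K * (real K - 1) / 2"
        using sum_xv[of K ?v, unfolded sv] by simp
    qed simp
    finally show "real (num_syt lam) = Phi K (row_len lam)" by simp
  qed
qed

lemma f_eq':
  "is_partition lam \<Longrightarrow> (\<forall>(a,b)\<in>lam. b < K) \<Longrightarrow> real (num_syt lam) = Phi K (row_len lam)"
  using f_eq by blast


lemma col_set:
  assumes P: "is_partition lam" and x: "0 < x"
  shows "{y. (x,y) \<in> lam} = {y. 0 < y \<and> x \<le> row_len lam y}"
  using mem_iff[OF P] x by auto

lemma col_rem:
  assumes P: "is_partition lam" and j: "j \<in> Rem lam"
  shows "col_len lam (row_len lam j) = j"
proof -
  have j': "0 < j" "0 < row_len lam j" "row_len lam (Suc j) < row_len lam j" using j unfolding Rem_def by auto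
  have "{y. 0 < y \<and> row_len lam j \<le> row_len lam y} = {1..j}"
  proof (rule set_eqI, rule iffI)
    fix y assume y: "y \<in> {y. 0 < y \<and> row_len lam j \<le> row_len lam y}"
    have "y \<le> j"
    proof (rule ccontr)
      assume "\<not> y \<le> j"
      then have "row_len lam y \<le> row_len lam (Suc j)" by (intro row_len_mono[OF P]) auto
      then show False using y j' by auto
    qed
    then show "y \<in> {1..j}" using y by auto
  next
    fix y assume "y \<in> {1..j}"
    then show "y \<in> {y. 0 < y \<and> row_len lam j \<le> row_len lam y}" using row_len_mono[OF P, of y j] by auto
  qed
  then show ?thesis unfolding col_len_def col_set[OF P j'(2)] by simp
qed

lemma col_add:
  assumes P: "is_partition lam" and i: "i \<in> Add lam"
  shows "col_len lam (row_len lam i + 1) = i - 1"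
proof -
  have i': "0 < i" "i = 1 \<or> row_len lam i < row_len lam (i - 1)" using i unfolding Add_def by auto
  have cs: "{y. (row_len lam i + 1, y) \<in> lam} = {y. 0 < y \<and> row_len lam i + 1 \<le> row_len lam y}"
    by (rule col_set[OF P]) simp
  have "{y. 0 < y \<and> row_len lam i + 1 \<le> row_len lam y} = {1..i - 1}"
  proof (rule set_eqI, rule iffI)
    fix y assume y: "y \<in> {y. 0 < y \<and> row_len lam i + 1 \<le> row_len lam y}"
    have "y < i"
    proof (rule ccontr)
      assume "\<not> y < i"
      then have "row_len lam y \<le> row_len lam i" by (intro row_len_mono[OF P]) (use i' in auto)
      then show False using y by auto
    qed
    then show "y \<in> {1..i - 1}" using y by auto
  next
    fix y assume y: "y \<in> {1..i - 1}"
    then have "i \<noteq> 1" by auto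
    then have "row_len lam i < row_len lam (i - 1)" using i' by auto
    moreover have "row_len lam (i - 1) \<le> row_len lam y" by (rule row_len_mono[OF P]) (use y in auto)
    ultimately show "y \<in> {y. 0 < y \<and> row_len lam i + 1 \<le> row_len lam y}" using y by auto
  qed
  then show ?thesis unfolding col_len_def cs by simp
qed

lemma c_cell_eq:
  assumes P: "is_partition lam" and i: "i \<in> Add lam" and j: "j \<in> Rem lam"
  shows "c_cell lam (lam - {remc lam j}) (insert (addc lam i) lam) =
    (if (row_len lam j, i) \<in> lam then (row_len lam j, i) else (row_len lam i + 1, j))"
proof -
  have e1: "insert (addc lam i) lam - lam = {addc lam i}" using addc_notin[OF P] by auto
  have e2: "lam - (lam - {remc lam j}) = {remc lam j}" using remc_in[OF P j] by auto
  show ?thesis unfolding c_cell_def e1 e2 by (simp add: the_elem_def)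
qed

lemma hook_sq:
  assumes P: "is_partition lam" and i: "i \<in> Add lam" and j: "j \<in> Rem lam"
    and iK: "i \<le> K" and jK: "j \<le> K"
  shows "(real (hook lam (c_cell lam (lam - {remc lam j}) (insert (addc lam i) lam))))^2
       = (xv K (row_len lam) i + 1 - xv K (row_len lam) j)^2"
proof -
  let ?r = "row_len lam"
  have i': "0 < i" using i unfolding Add_def by auto
  have j': "0 < j" "0 < ?r j" "?r (Suc j) < ?r j" using j unfolding Rem_def by auto
  have xd: "xv K ?r i + 1 - xv K ?r j = real (?r i) - real (?r j) + real j - real i + 1"
    unfolding xv_def using iK jK by (simp add: of_nat_diff)
  show ?thesis
  proof (cases "i \<le> j")
    case True
    have rji: "?r j \<le> ?r i" by (rule row_len_mono[OF P i' True])
    then have inl: "(?r j, i) \<in> lam" using mem_iff[OF P] i' j' by auto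
    have "hook lam (?r j, i) = (?r i - ?r j) + (j - i) + 1"
      unfolding hook_def using col_rem[OF P j] by simp
    then have "real (hook lam (?r j, i)) = xv K ?r i + 1 - xv K ?r j"
      unfolding xd using rji True by (simp add: of_nat_diff)
    then show ?thesis unfolding c_cell_eq[OF P i j] using inl by simp
  next
    case False
    then have ji: "Suc j \<le> i" by simp
    have "?r i \<le> ?r (Suc j)" by (rule row_len_mono[OF P _ ji]) simp
    then have lt: "?r i < ?r j" using j' by simp
    then have ninl: "(?r j, i) \<notin> lam" using mem_iff[OF P] by auto
    have "hook lam (?r i + 1, j) = (?r j - (?r i + 1)) + ((i - 1) - j) + 1"
      unfolding hook_def using col_add[OF P i] by simp
    then have "real (hook lam (?r i + 1, j)) = - (xv K ?r i + 1 - xv K ?r j)"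
      unfolding xd using lt ji by (simp add: of_nat_diff)
    then show ?thesis unfolding c_cell_eq[OF P i j] using ninl by (simp add: power2_commute)
  qed
qed


lemma Add_bound:
  assumes P: "is_partition lam" and i: "i \<in> Add lam"
  shows "1 \<le> i \<and> i \<le> card lam + 1"
proof -
  have i': "0 < i" "i = 1 \<or> row_len lam i < row_len lam (i - 1)" using i unfolding Add_def by auto
  show ?thesis
  proof (cases "i = 1")
    case True then show ?thesis by simp
  next
    case False
    then have "0 < row_len lam (i - 1)" using i' by auto
    then have "(1, i - 1) \<in> lam" using mem_iff[OF P, of 1 "i - 1"] i' False by auto
    then have "i - 1 \<le> card lam" by (rule row_bound[OF P])
    then show ?thesis using i' by auto
  qed
qed

lemma Ualg_nonAdd:
  assumes P: "is_partition lam" and i: "i \<in> {1..K}" "i \<notin> Add lam"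
  shows "Ualg K (xv K (row_len lam)) N i = 0"
proof -
  let ?v = "row_len lam" and ?x = "xv K (row_len lam)"
  have i1: "i \<noteq> 1" "\<not> ?v i < ?v (i - 1)" using i unfolding Add_def by auto
  have "?v i \<le> ?v (i - 1)" by (rule row_len_mono[OF P]) (use i i1 in auto)
  then have ev: "?v (i - 1) = ?v i" using i1 by simp
  have "?x i + 1 - ?x (i - 1) = 0" unfolding xv_def using i i1 ev by (auto simp: of_nat_diff)
  moreover have "i - 1 \<in> {1..K} - {i}" using i i1 by auto
  ultimately have "(\<Prod>m\<in>{1..K}-{i}. ?x i + 1 - ?x m) = 0" by (intro prod_zero) auto
  then show ?thesis unfolding Ualg_def by simp
qed

lemma notin_minus:
  assumes P: "is_partition lam" and j: "j \<in> Rem lam" "j \<in> {1..K}"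
  shows "xv K (row_len lam) j - 1 \<notin> xv K (row_len lam) ` {1..K}"
proof
  let ?v = "row_len lam"
  assume "xv K ?v j - 1 \<in> xv K ?v ` {1..K}"
  then obtain m where m: "m \<in> {1..K}" "xv K ?v m = xv K ?v j - 1" by auto
  then have e: "?v m + (K - m) + 1 = ?v j + (K - j)" unfolding xv_def using j m by (auto simp: of_nat_diff)
  have j': "0 < j" "0 < ?v j" "?v (Suc j) < ?v j" using j unfolding Rem_def by auto
  show False
  proof (cases "m \<le> j")
    case True
    have "?v j \<le> ?v m" by (rule row_len_mono[OF P]) (use m True in auto)
    then show False using e True by auto
  next
    case False
    have "?v m \<le> ?v (Suc j)" by (rule row_len_mono[OF P]) (use False in auto)
    then show False using e False j' m(1) j(2) by auto
  qed
qed

lemma notin_plus: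
  assumes P: "is_partition lam" and i: "i \<in> Add lam" "i \<in> {1..K}"
  shows "xv K (row_len lam) i + 1 \<notin> xv K (row_len lam) ` {1..K}"
proof
  let ?v = "row_len lam"
  assume "xv K ?v i + 1 \<in> xv K ?v ` {1..K}"
  then obtain m where m: "m \<in> {1..K}" "xv K ?v m = xv K ?v i + 1" by auto
  then have e: "?v m + (K - m) = ?v i + (K - i) + 1" unfolding xv_def using i m by (auto simp: of_nat_diff)
  have i': "0 < i" "i = 1 \<or> ?v i < ?v (i - 1)" using i unfolding Add_def by auto
  show False
  proof (cases "i \<le> m")
    case True
    have "?v m \<le> ?v i" by (rule row_len_mono[OF P]) (use i' True in auto)
    then show False using e True by auto
  next
    case False
    then have "i \<noteq> 1" "m \<le> i - 1" using m by auto
    then have "?v i < ?v (i - 1)" "?v (i - 1) \<le> ?v m" using i' row_len_mono[OF P, of m "i - 1"] m by auto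
    then show False using e False m(1) i(2) by auto
  qed
qed

theorem corollary4p16:
  fixes lam :: "cell set"
  assumes "is_partition lam" and "lam \<noteq> {}"
  defines "n \<equiv> card lam"
  shows "(\<forall>mu\<in>down_set lam.
           (\<Sum>nu\<in>up_set lam. real (num_syt mu * num_syt nu) / (real (hook lam (c_cell lam mu nu)))^2)
             = (real n + 1) / real n * (real (num_syt lam))^2) \<and>
         (\<forall>nu\<in>up_set lam.
           real (num_syt lam * num_syt nu) / real n +
           (\<Sum>mu\<in>down_set lam. real (num_syt mu * num_syt nu) / (real (hook lam (c_cell lam mu nu)))^2)
             = (real n + 1) / real n * (real (num_syt lam))^2)"
proof -
  note P = assms(1)
  define K where "K = n + 2"
  define v where "v = row_len lam"
  define x where "x = xv K v"
  define F where "F = real (num_syt lam)"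
  have fl: "finite lam" using part_finite[OF P] .
  have npos: "n > 0" unfolding n_def using fl assms(2) by (simp add: card_gt_0_iff)
  have Kb: "\<forall>(a,b)\<in>lam. b < K"
  proof (intro ballI)
    fix c assume c: "c \<in> lam"
    obtain a b where ab: "c = (a,b)" by (cases c)
    have "b \<le> n" using row_bound[OF P] c ab unfolding n_def by auto
    then show "case c of (a,b) \<Rightarrow> b < K" unfolding ab K_def by simp
  qed
  have K2: "K \<ge> 2" unfolding K_def by simp
  have FP: "F = Phi K v" unfolding F_def v_def by (rule f_eq'[OF P Kb])
  have sv: "(\<Sum>i\<in>{1..K}. v i) = n"
    unfolding v_def n_def using card_rows[OF P, of K] Kb by fastforce
  have inj: "inj_on x {1..K}" unfolding x_def v_def by (rule xv_inj[OF P])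
  have vK: "v K = 0" unfolding v_def using row_len_zero[OF P Kb] by simp
  have xK: "x K = 0" unfolding x_def xv_def using vK by simp
  have nonneg: "\<forall>i\<in>{1..K}. x i \<ge> 0" unfolding x_def xv_def by simp
  have AK: "Add lam \<subseteq> {1..K}" using Add_bound[OF P] unfolding K_def n_def by fastforce
  have RK: "Rem lam \<subseteq> {1..K}" by (rule Rem_sub[OF P Kb])
  have fA: "finite (Add lam)" using AK finite_subset by blast
  have fR: "finite (Rem lam)" using RK finite_subset by blast
  have U: "real (num_syt (insert (addc lam i) lam)) = F * Ualg K x n i" if i: "i \<in> Add lam" for i
  proof -
    let ?nu = "insert (addc lam i) lam"
    have Pn: "is_partition ?nu" by (rule up_part[OF P i])
    have cn: "card ?nu = n + 1" unfolding n_def using addc_notin[OF P] fl by simp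
    have Kn: "\<forall>(a,b)\<in>?nu. b < K"
    proof (intro ballI)
      fix c assume c: "c \<in> ?nu"
      obtain a b where ab: "c = (a,b)" by (cases c)
      have "b \<le> n + 1" using row_bound[OF Pn] c ab cn by auto
      then show "case c of (a,b) \<Rightarrow> b < K" unfolding ab K_def by simp
    qed
    have iK: "i \<in> {1..K}" using i AK by auto
    have "real (num_syt ?nu) = Phi K (row_len ?nu)" by (rule f_eq'[OF Pn Kn])
    also have "row_len ?nu = v(i := v i + 1)" unfolding v_def by (rule row_len_up[OF P i])
    also have "Phi K (v(i := v i + 1)) = Phi K v * Ualg K x n i"
      using Phi_up[OF iK, of v, unfolded sv] inj unfolding Ualg_def x_def v_def by simp
    finally show ?thesis unfolding FP .
  qed
  have D: "real (num_syt (lam - {remc lam j})) = F * Dalg K x n j" if j: "j \<in> Rem lam" for j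
  proof -
    let ?mu = "lam - {remc lam j}"
    have Pm: "is_partition ?mu" by (rule down_part[OF P j])
    have Km: "\<forall>(a,b)\<in>?mu. b < K" using Kb by auto
    have jK: "j \<in> {1..K}" using j RK by auto
    have vj: "v j \<ge> 1" using j unfolding Rem_def v_def by auto
    have "real (num_syt ?mu) = Phi K (row_len ?mu)" by (rule f_eq'[OF Pm Km])
    also have "row_len ?mu = v(j := v j - 1)" unfolding v_def by (rule row_len_down[OF P j])
    also have "Phi K (v(j := v j - 1)) = Phi K v * Dalg K x n j"
      using Phi_down[where v=v, OF jK vj, unfolded sv] inj unfolding Dalg_def x_def v_def by simp
    finally show ?thesis unfolding FP .
  qed
  have H: "(real (hook lam (c_cell lam (lam - {remc lam j}) (insert (addc lam i) lam))))^2 = (x i + 1 - x j)^2"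
    if i: "i \<in> Add lam" and j: "j \<in> Rem lam" for i j
    unfolding x_def v_def by (rule hook_sq[OF P i j]) (use i j AK RK in auto)
  have part1: "(\<Sum>nu\<in>up_set lam. real (num_syt mu * num_syt nu) / (real (hook lam (c_cell lam mu nu)))^2)
             = (real n + 1) / real n * F^2" if mu: "mu \<in> down_set lam" for mu
  proof -
    obtain j where j: "j \<in> Rem lam" and muj: "mu = lam - {remc lam j}"
      using mu unfolding down_set_eq[OF P] by auto
    have jK: "j \<in> {1..K}" using j RK by auto
    have jnK: "j \<noteq> K" using j vK unfolding Rem_def v_def by auto
    have "(\<Sum>nu\<in>up_set lam. real (num_syt mu * num_syt nu) / (real (hook lam (c_cell lam mu nu)))^2)
        = (\<Sum>i\<in>Add lam. real (num_syt mu * num_syt (insert (addc lam i) lam)) / (real (hook lam (c_cell lam mu (insert (addc lam i) lam))))^2)"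
      unfolding up_set_eq[OF P] sum.reindex[OF up_inj[OF P]] by (simp only: comp_def)
    also have "\<dots> = (\<Sum>i\<in>Add lam. F^2 * (Dalg K x n j * (Ualg K x n i / (x i + 1 - x j)^2)))"
    proof (rule sum.cong)
      fix i assume i: "i \<in> Add lam"
      show "real (num_syt mu * num_syt (insert (addc lam i) lam)) / (real (hook lam (c_cell lam mu (insert (addc lam i) lam))))^2
          = F^2 * (Dalg K x n j * (Ualg K x n i / (x i + 1 - x j)^2))"
        unfolding muj of_nat_mult D[OF j] U[OF i] H[OF i j] by (simp add: power2_eq_square)
    qed simp
    also have "\<dots> = F^2 * (Dalg K x n j * (\<Sum>i\<in>Add lam. Ualg K x n i / (x i + 1 - x j)^2))"
      by (simp add: sum_distrib_left)
    also have "(\<Sum>i\<in>Add lam. Ualg K x n i / (x i + 1 - x j)^2) = (\<Sum>i\<in>{1..K}. Ualg K x n i / (x i + 1 - x j)^2)"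
      by (rule sum.mono_neutral_left) (use AK Ualg_nonAdd[OF P] in \<open>auto simp: x_def v_def\<close>)
    also have "Dalg K x n j * \<dots> = (real n + 1) / real n"
      by (rule id1[OF K2 inj xK nonneg jK jnK _ npos]) (use notin_minus[OF P j jK] in \<open>simp add: x_def v_def\<close>)
    finally show ?thesis by simp
  qed
  have part2: "real (num_syt lam * num_syt nu) / real n +
           (\<Sum>mu\<in>down_set lam. real (num_syt mu * num_syt nu) / (real (hook lam (c_cell lam mu nu)))^2)
             = (real n + 1) / real n * F^2" if nu: "nu \<in> up_set lam" for nu
  proof -
    obtain i where i: "i \<in> Add lam" and nui: "nu = insert (addc lam i) lam"
      using nu unfolding up_set_eq[OF P] by auto
    have iK: "i \<in> {1..K}" using i AK by auto
    have "(\<Sum>mu\<in>down_set lam. real (num_syt mu * num_syt nu) / (real (hook lam (c_cell lam mu nu)))^2)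
        = (\<Sum>j\<in>Rem lam. real (num_syt (lam - {remc lam j}) * num_syt nu) / (real (hook lam (c_cell lam (lam - {remc lam j}) nu)))^2)"
      unfolding down_set_eq[OF P] sum.reindex[OF down_inj[OF P]] by (simp only: comp_def)
    also have "\<dots> = (\<Sum>j\<in>Rem lam. F^2 * (Dalg K x n j * Ualg K x n i / (x i + 1 - x j)^2))"
    proof (rule sum.cong)
      fix j assume j: "j \<in> Rem lam"
      show "real (num_syt (lam - {remc lam j}) * num_syt nu) / (real (hook lam (c_cell lam (lam - {remc lam j}) nu)))^2
          = F^2 * (Dalg K x n j * Ualg K x n i / (x i + 1 - x j)^2)"
        unfolding nui of_nat_mult D[OF j] U[OF i] H[OF i j] by (simp add: power2_eq_square)
    qed simp
    also have "\<dots> = F^2 * (\<Sum>j\<in>Rem lam. Dalg K x n j * Ualg K x n i / (x i + 1 - x j)^2)"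
      by (simp add: sum_distrib_left)
    also have "(\<Sum>j\<in>Rem lam. Dalg K x n j * Ualg K x n i / (x i + 1 - x j)^2) = (\<Sum>j\<in>{1..K}. Dalg K x n j * Ualg K x n i / (x i + 1 - x j)^2)"
      by (rule sum.mono_neutral_left) (use RK Dalg_nonRem[OF P Kb] in \<open>auto simp: x_def v_def\<close>)
    finally have S: "(\<Sum>mu\<in>down_set lam. real (num_syt mu * num_syt nu) / (real (hook lam (c_cell lam mu nu)))^2)
        = F^2 * (\<Sum>j\<in>{1..K}. Dalg K x n j * Ualg K x n i / (x i + 1 - x j)^2)" .
    have T: "real (num_syt lam * num_syt nu) / real n = F^2 * (Ualg K x n i / real n)"
      unfolding nui of_nat_mult U[OF i] F_def[symmetric] by (simp add: power2_eq_square)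
    have eq: "Ualg K x n i / real n + (\<Sum>j\<in>{1..K}. Dalg K x n j * Ualg K x n i / (x i + 1 - x j)^2) = (real n + 1) / real n"
      by (rule id2[OF _ inj nonneg iK _ npos]) (use K2 notin_plus[OF P i iK] in \<open>simp_all add: x_def v_def\<close>)
    show ?thesis unfolding S T distrib_left[symmetric] eq by (simp only: mult.commute)
  qed
  show ?thesis using part1 part2 unfolding F_def by blast
qed


end
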